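(* Let $\chi$ be a character of $E^\times$ of odd level $m=2n-1\ge1$, let $0\le\alpha<n$ and $s\in R_\alpha^{\langle\tau\rangle,\prime}$. There is a unique character $\chi_s$ of $F^\times U_E^{2\alpha+1}$ such that: (i) $\chi_s=\chi$ on $F^\times U_E^{m+1}$; (ii) if $\alpha<\lfloor n/2\rfloor$, then $\chi_s=\chi\circ\tau^i$ on $F^\times U_E^{2(2\alpha+1)}$, where $i\in\{0,1\}$ is such that $s\equiv(-1)^i\bmod u$; (iii) $\chi_s(1+u^{2\alpha+1}h)=\chi(1+u^{2\alpha+1}h\tilde s)$ for all $h\in\mathcal O_F$, where $\tilde s\in\mathcal O_F$ is any lift of $s$. Conversely, if $\theta$ is a character of $F^\times U_E^{2\alpha+1}$ which coincides with $\chi$ or with $\chi^\tau$ on $F^\times U_E^{\min\{m+1,2(2\alpha+1)\}}$, then there is a unique $s\in R_\alpha^{\langle\tau\rangle,\prime}$ with $\theta=\chi_s$.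
   Context: $k=\mathbb F_q$, $q$ odd, $F=k((t))$, $\mathcal O_F=k[[t]]$, $E=k((u))$, $u^2=t$, $U_E^j=1+u^jk[[u]]$; $\tau$ is the nontrivial automorphism of $E/F$ ($u\mapsto-u$), $\chi^\tau=\chi\circ\tau$; the level of $\chi$ is the least $j\ge0$ with $\chi|_{U_E^{j+1}}=1$. For $0\le\alpha<n$ (with $m=2n-1$) let $R_\alpha=k[u]/(u^{m-2\alpha})$ with $\tau$ acting by $u\mapsto -u$, $R_\alpha^{\langle\tau\rangle}=k[t]/(t^{n-\alpha})$ its $\tau$-invariants, and $R_\alpha^{\langle\tau\rangle,\prime}=\{s\in R_\alpha^{\langle\tau\rangle}: s\equiv\pm1\bmod u^{m+1-2(2\alpha+1)}\}$ (no condition if the exponent is $\le0$). *)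

theory Defs
  imports "HOL-Computational_Algebra.Formal_Laurent_Series" Complex_Main
begin

text \<open>E = k((u)) is modelled as the type 'k fls (u = fls_X); F = k((t)) with t = u^2 is
  the image of k((t)) under t \<mapsto> u^2 (fls_compose_power _ 2).\<close>

definition u_E :: "'k::field fls" where "u_E = fls_X"

definition tau :: "'k::field fls \<Rightarrow> 'k fls" where
  "tau x = fls_compose_fps x (- fps_X)"

definition O_E :: "'k::field fls set" where
  "O_E = range fps_to_fls"

definition F_field :: "'k::field fls set" where
  "F_field = {fls_compose_power g 2 | g. True}"

definition F_units :: "'k::field fls set" where
  "F_units = F_field - {0}"

definition O_F :: "'k::field fls set" where
  "O_F = {fls_compose_power (fps_to_fls p) 2 | p. True}"

definition U_E :: "nat \<Rightarrow> 'k::field fls set" where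
  "U_E j = {1 + u_E ^ j * h | h. h \<in> O_E}"

definition FU :: "nat \<Rightarrow> 'k::field fls set" where
  "FU j = {a * x | a x. a \<in> F_units \<and> x \<in> U_E j}"

definition is_character_on :: "'k::field fls set \<Rightarrow> ('k fls \<Rightarrow> complex) \<Rightarrow> bool" where
  "is_character_on H \<theta> \<longleftrightarrow>
     (\<forall>x\<in>H. \<theta> x \<noteq> 0) \<and> (\<forall>x\<in>H. \<forall>y\<in>H. \<theta> (x * y) = \<theta> x * \<theta> y)"

definition E_units :: "'k::field fls set" where
  "E_units = UNIV - {0}"

definition has_level :: "('k::field fls \<Rightarrow> complex) \<Rightarrow> nat \<Rightarrow> bool" where
  "has_level \<chi> j \<longleftrightarrow> j = (LEAST l. \<forall>x\<in>U_E (l + 1). \<chi> x = 1)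
      \<and> (\<forall>x\<in>U_E (j + 1). \<chi> x = 1)"

definition cong_u :: "'k::field fls \<Rightarrow> 'k fls \<Rightarrow> int \<Rightarrow> bool" where
  "cong_u x y j \<longleftrightarrow> (\<forall>i::int. i < j \<longrightarrow> fls_nth x i = fls_nth y i)"

text \<open>R_\<alpha> = k[u]/(u^{m-2\<alpha>}), represented by its canonical representatives:
  polynomials in u of degree < m - 2\<alpha>, viewed inside E; tau acts by u \<mapsto> -u.\<close>
definition R_alpha :: "nat \<Rightarrow> nat \<Rightarrow> 'k::field fls set" where
  "R_alpha m \<alpha> = {x. \<forall>i. fls_nth x i \<noteq> 0 \<longrightarrow> 0 \<le> i \<and> i < int m - 2 * int \<alpha>}"

definition R_alpha_tau :: "nat \<Rightarrow> nat \<Rightarrow> 'k::field fls set" where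
  "R_alpha_tau m \<alpha> = {s \<in> R_alpha m \<alpha>. tau s = s}"

definition R_alpha_tau' :: "nat \<Rightarrow> nat \<Rightarrow> 'k::field fls set" where
  "R_alpha_tau' m \<alpha> = {s \<in> R_alpha_tau m \<alpha>.
      let e = int m + 1 - 2 * (2 * int \<alpha> + 1) in
      e \<le> 0 \<or> cong_u s 1 e \<or> cong_u s (-1) e}"

definition is_lift :: "nat \<Rightarrow> nat \<Rightarrow> 'k::field fls \<Rightarrow> 'k fls \<Rightarrow> bool" where
  "is_lift m \<alpha> s s' \<longleftrightarrow> s' \<in> O_F \<and> cong_u s' s (int m - 2 * int \<alpha>)"

definition is_chi_s ::
  "('k::field fls \<Rightarrow> complex) \<Rightarrow> nat \<Rightarrow> nat \<Rightarrow> 'k fls \<Rightarrow> ('k fls \<Rightarrow> complex) \<Rightarrow> bool" where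
  "is_chi_s \<chi> n \<alpha> s \<theta> \<longleftrightarrow>
     (let m = 2 * n - 1 in
      is_character_on (FU (2 * \<alpha> + 1)) \<theta>
      \<and> (\<forall>x\<in>FU (m + 1). \<theta> x = \<chi> x)
      \<and> (\<alpha> < n div 2 \<longrightarrow>
           (\<forall>i::nat. i \<in> {0, 1} \<longrightarrow> fls_nth s 0 = (-1) ^ i \<longrightarrow>
              (\<forall>x\<in>FU (2 * (2 * \<alpha> + 1)). \<theta> x = \<chi> ((tau ^^ i) x))))
      \<and> (\<forall>h\<in>O_F. \<forall>s'. is_lift m \<alpha> s s' \<longrightarrow>
           \<theta> (1 + u_E ^ (2 * \<alpha> + 1) * h) = \<chi> (1 + u_E ^ (2 * \<alpha> + 1) * h * s')))"

end

theory Submission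
  imports Defs
begin

unbundle fps_syntax

lemma even_card_invol:
  assumes "finite A" "\<forall>x\<in>A. f x \<in> A \<and> f x \<noteq> x \<and> f (f x) = x"
  shows "even (card A)"
  using assms
proof (induction "card A" arbitrary: A rule: less_induct)
  case less
  show ?case
  proof (cases "A = {}")
    case True then show ?thesis by simp
  next
    case False
    then obtain x where x: "x \<in> A" by blast
    define A' where "A' = A - {x, f x}"
    have fx: "f x \<in> A" "f x \<noteq> x" using less.prems x by auto
    have cA: "card A = card A' + 2"
    proof -
      have "card A' = card A - card {x, f x}" unfolding A'_def
        using less.prems(1) x fx by (subst card_Diff_subset) auto
      moreover have "card {x, f x} = 2" using fx by simp
      moreover have "card A \<ge> 2" using less.prems(1) x fx
        using card_mono[of A "{x, f x}"] by auto
      ultimately show ?thesis by simp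
    qed
    have "even (card A')"
    proof (rule less.hyps)
      show "card A' < card A" using cA by simp
      show "finite A'" using less.prems(1) A'_def by simp
      show "\<forall>y\<in>A'. f y \<in> A' \<and> f y \<noteq> y \<and> f (f y) = y"
        using less.prems(2) x unfolding A'_def by auto (metis)
    qed
    then show ?thesis using cA by simp
  qed
qed

lemma two_nz:
  assumes "odd (card (UNIV :: 'k::{field,finite} set))"
  shows "(2::'k) \<noteq> 0"
proof
  assume h: "(2::'k) = 0"
  have "\<forall>x\<in>(UNIV::'k set). x + 1 \<in> UNIV \<and> x + 1 \<noteq> x \<and> x + 1 + 1 = x"
  proof
    fix x :: 'k
    have "x + 1 + 1 = x" using h by (simp add: add.assoc)
    moreover have "x + 1 \<noteq> x" by simp
    ultimately show "x + 1 \<in> UNIV \<and> x + 1 \<noteq> x \<and> x + 1 + 1 = x" by blast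
  qed
  then have "even (card (UNIV::'k set))" by (rule even_card_invol[of UNIV "\<lambda>x. x + 1", OF finite_UNIV])
  then show False using assms by simp
qed


definition Mid :: "int \<Rightarrow> 'k::field fls set" where
  "Mid j = {x. \<forall>i<j. x $$ i = 0}"

lemma Mid_iff: "x \<in> Mid j \<longleftrightarrow> (\<forall>i<j. x $$ i = 0)" by (simp add: Mid_def)

lemma Mid_0 [simp]: "0 \<in> Mid j" by (simp add: Mid_def)
lemma Mid_add: "x \<in> Mid j \<Longrightarrow> y \<in> Mid j \<Longrightarrow> x + y \<in> Mid j" by (simp add: Mid_def)
lemma Mid_diff: "x \<in> Mid j \<Longrightarrow> y \<in> Mid j \<Longrightarrow> x - y \<in> Mid j" by (simp add: Mid_def)
lemma Mid_uminus: "x \<in> Mid j \<Longrightarrow> - x \<in> Mid j" by (simp add: Mid_def)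
lemma Mid_uminus_iff [simp]: "- x \<in> Mid j \<longleftrightarrow> x \<in> Mid j" by (simp add: Mid_def)
lemma Mid_mono: "i \<le> j \<Longrightarrow> x \<in> Mid j \<Longrightarrow> x \<in> Mid i" by (simp add: Mid_def)

lemma Mid_subdeg: "x \<noteq> 0 \<Longrightarrow> x \<in> Mid j \<Longrightarrow> j \<le> fls_subdegree x"
  by (intro fls_subdegree_geI) (auto simp: Mid_def)

lemma Mid_mult: assumes "x \<in> Mid i" "y \<in> Mid j" shows "x * y \<in> Mid (i + j)"
proof (cases "x = 0 \<or> y = 0")
  case True then show ?thesis by auto
next
  case False
  then have "i \<le> fls_subdegree x" "j \<le> fls_subdegree y" using assms Mid_subdeg by auto
  then show ?thesis unfolding Mid_def by (auto intro!: fls_times_nth_eq0)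
qed

lemma Mid_const [simp]: "fls_const c \<in> Mid 0" by (simp add: Mid_def)
lemma Mid_one [simp]: "1 \<in> Mid 0" by (simp add: Mid_def)
lemma Mid_uE: "u_E ^ k \<in> Mid (int k)" by (simp add: Mid_def u_E_def)

lemma Mid_mult_const: "y \<in> Mid j \<Longrightarrow> fls_const c * y \<in> Mid j"
  using Mid_mult[of "fls_const c" 0 y j] by simp

lemma O_E_Mid: "O_E = Mid 0"
proof (intro set_eqI iffI)
  fix x :: "'a fls" assume "x \<in> O_E" then show "x \<in> Mid 0" by (auto simp: O_E_def Mid_def)
next
  fix x :: "'a fls" assume "x \<in> Mid 0"
  then have "0 \<le> fls_subdegree x" by (intro fls_subdegree_ge0I) (auto simp: Mid_def)
  then have "x = fps_to_fls (fls_regpart x)" by simp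
  then show "x \<in> O_E" unfolding O_E_def by blast
qed

lemma uE_times_nth: "(u_E ^ k * h) $$ i = h $$ (i - int k)"
  by (simp add: u_E_def fls_X_power_times_conv_shift)

lemma U_E_iff: "x \<in> U_E j \<longleftrightarrow> x - 1 \<in> Mid (int j)"
proof
  assume "x \<in> U_E j"
  then obtain h where "h \<in> Mid 0" "x = 1 + u_E ^ j * h" by (auto simp: U_E_def O_E_Mid)
  then show "x - 1 \<in> Mid (int j)" using Mid_mult[OF Mid_uE[of j], of h 0] by simp
next
  assume a: "x - 1 \<in> Mid (int j)"
  define h where "h = fls_shift (int j) (x - 1)"
  have "h \<in> Mid 0" using a by (auto simp: Mid_def h_def)
  moreover have "u_E ^ j * h = x - 1" by (simp add: h_def u_E_def fls_X_power_times_conv_shift)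
  ultimately show "x \<in> U_E j" unfolding U_E_def O_E_Mid by (auto intro!: exI[of _ h])
qed

lemma Mid1_nth0: "y - 1 \<in> Mid 1 \<Longrightarrow> y $$ 0 = 1"
  by (auto simp: Mid_def)

lemma Mid1_Mid0: "y - 1 \<in> Mid 1 \<Longrightarrow> y \<in> Mid 0"
  using Mid_add[of "y - 1" 0 1] by (auto simp: Mid_def)

lemma Mid1_nz: "y - 1 \<in> Mid 1 \<Longrightarrow> y \<noteq> 0"
proof
  assume "y - 1 \<in> Mid 1" "y = 0"
  then have "y $$ 0 = 1" using Mid1_nth0 by blast
  then show False using \<open>y = 0\<close> by simp
qed

lemma Mid1_inverse:
  assumes "y - 1 \<in> Mid 1"
  shows "inverse y \<in> Mid 0" "inverse y - 1 \<in> Mid 1"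
proof -
  have y0: "y $$ 0 = 1" "y \<noteq> 0" using assms Mid1_nth0 Mid1_nz by auto
  have "y \<in> Mid 0" using assms Mid1_Mid0 by auto
  then have "fls_subdegree y = 0" using y0 by (intro fls_subdegree_eqI) (auto simp: Mid_def)
  then have "fls_subdegree (inverse y) = 0" by simp
  then show i0: "inverse y \<in> Mid 0" by (auto simp: Mid_def)
  have "inverse y - 1 = - ((y - 1) * inverse y)" using y0 by (simp add: algebra_simps)
  then show "inverse y - 1 \<in> Mid 1" using Mid_mult[OF assms i0] by simp
qed

lemma Mid1_mult: "x - 1 \<in> Mid 1 \<Longrightarrow> y - 1 \<in> Mid 1 \<Longrightarrow> x * y - 1 \<in> Mid 1"
proof -
  assume a: "x - 1 \<in> Mid 1" "y - 1 \<in> Mid 1"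
  have "x * y - 1 = (x - 1) * y + (y - 1)" by (simp add: algebra_simps)
  moreover have "(x - 1) * y \<in> Mid 1" using Mid_mult[OF a(1) Mid1_Mid0[OF a(2)]] by simp
  ultimately show ?thesis using Mid_add a by metis
qed

lemma Mid1_plus: "z \<in> Mid j \<Longrightarrow> 1 \<le> j \<Longrightarrow> (1 + z) - 1 \<in> Mid 1"
  by (simp add: Mid_mono[of 1 j])

definition sg :: "int \<Rightarrow> 'k::field" where "sg i = (-1) powi i"

lemma sg_even: "sg i = (if even i then 1 else -1)"
proof (cases "i \<ge> 0")
  case True
  then show ?thesis unfolding sg_def power_int_def by (auto simp: even_nat_iff)
next
  case False
  then show ?thesis unfolding sg_def power_int_def by (auto simp: even_nat_iff)
qed

lemma sg_add_nat: "sg (d + int k) = sg d * (-1) ^ k"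
  unfolding sg_def by (subst power_int_add) auto

lemma fps_compose_negX_nth:
  "((f :: 'k::field fps) oo (- fps_X)) $ k = (-1) ^ k * f $ k"
proof -
  have p: "(- fps_X :: 'k fps) ^ i = fps_const ((-1) ^ i) * fps_X ^ i" for i
    by (induction i) (simp_all add: algebra_simps flip: fps_const_neg)
  have "((f oo (- fps_X)) $ k) = (\<Sum>i\<in>{0..k}. f $ i * ((- fps_X) ^ i $ k))"
    by (simp add: fps_compose_nth)
  also have "\<dots> = (\<Sum>i\<in>{k}. f $ i * ((- fps_X) ^ i $ k))"
    by (intro sum.mono_neutral_right) (auto simp: p)
  also have "\<dots> = (-1) ^ k * f $ k"
    by (simp add: p)
  finally show ?thesis .
qed

lemma negX_powi: "((- fls_X :: 'k::field fls) powi d) = fls_const (sg d) * fls_shift (-d) 1"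
proof -
  have e: "(- fls_X :: 'k fls) = fls_const (-1) * fls_X" by simp
  have x: "(fls_X :: 'k fls) powi d = fls_shift (-d) 1"
  proof (cases "d \<ge> 0")
    case True
    then show ?thesis unfolding power_int_def by (simp add: fls_X_power_conv_shift_1)
  next
    case False
    then have "(fls_X :: 'k fls) powi d = inverse (fls_X ^ nat (-d))"
      unfolding power_int_def by (simp add: power_inverse)
    also have "\<dots> = inverse (fls_shift (- int (nat (-d))) 1)" by (simp add: fls_X_power_conv_shift_1)
    also have "\<dots> = fls_shift (-d) 1" using False fls_inverse_X_intpow[of "- d", where 'a='k] by simp
    finally show ?thesis .
  qed
  show ?thesis unfolding e power_int_mult_distrib x sg_def by (simp add: fls_const_power_int)
qed

lemma tau_nth: "tau (x :: 'k::field fls) $$ i = sg i * x $$ i"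
proof (cases "x = 0")
  case True then show ?thesis by (simp add: tau_def)
next
  case False
  define d where "d = fls_subdegree x"
  define b where "b = fls_base_factor_to_fps x"
  have t: "tau x = (fps_to_fls (b oo - fps_X) * fls_const (sg d)) * fls_shift (-d) 1"
    unfolding tau_def fls_compose_fps_def b_def d_def
    by (simp add: negX_powi fps_X_to_fls mult_ac)
  have "tau x $$ i = (fps_to_fls (b oo - fps_X) * fls_const (sg d)) $$ (i - d)"
    unfolding t by (simp add: fls_X_intpow_times_conv_shift)
  also have "\<dots> = sg i * x $$ i"
  proof (cases "i < d")
    case True then show ?thesis by (simp add: d_def)
  next
    case False
    then obtain k where k: "i = d + int k" by (metis add_diff_cancel_left' nat_int_add zle_iff_zadd not_less)
    have "(fps_to_fls (b oo - fps_X) * fls_const (sg d)) $$ (i - d) = (-1)^k * b $ k * sg d"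
      using k by (simp add: fps_compose_negX_nth)
    also have "\<dots> = sg i * x $$ i" unfolding k sg_add_nat b_def d_def
      by (simp add: fls_base_factor_to_fps_nth add.commute)
    finally show ?thesis .
  qed
  finally show ?thesis .
qed


lemma sg_sq: "sg i * sg i = (1::'k::field)" by (simp add: sg_even)

lemma tau_add: "tau (x + y) = tau x + tau (y :: 'k::field fls)"
  by (rule fls_eqI) (simp add: tau_nth algebra_simps)
lemma tau_uminus: "tau (- x) = - tau (x :: 'k::field fls)"
  by (rule fls_eqI) (simp add: tau_nth algebra_simps)
lemma tau_diff: "tau (x - y) = tau x - tau (y :: 'k::field fls)"
  by (rule fls_eqI) (simp add: tau_nth algebra_simps)
lemma tau_mult: "tau (x * y) = tau x * tau (y :: 'k::field fls)"
  unfolding tau_def by (rule fls_compose_fps_mult) auto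
lemma tau_one [simp]: "tau 1 = (1 :: 'k::field fls)"
  by (simp add: tau_def)
lemma tau_zero [simp]: "tau 0 = (0 :: 'k::field fls)"
  by (simp add: tau_def)
lemma tau_const [simp]: "tau (fls_const c) = (fls_const c :: 'k::field fls)"
  by (simp add: tau_def)
lemma tau_inverse: "tau (inverse x) = inverse (tau (x :: 'k::field fls))"
  unfolding tau_def by (rule fls_compose_fps_inverse) auto
lemma tau_tau [simp]: "tau (tau x) = (x :: 'k::field fls)"
  by (rule fls_eqI) (simp add: tau_nth mult.assoc[symmetric] sg_sq)
lemma tau_power: "tau (x ^ k) = tau (x :: 'k::field fls) ^ k"
  by (induction k) (simp_all add: tau_mult)
lemma tau_uE: "tau u_E = - (u_E :: 'k::field fls)"
  by (rule fls_eqI) (simp add: tau_nth u_E_def sg_even)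
lemma tau_Mid: "x \<in> Mid j \<Longrightarrow> tau x \<in> Mid j"
  by (simp add: Mid_def tau_nth)
lemma tau_Mid_iff [simp]: "tau x \<in> Mid j \<longleftrightarrow> x \<in> Mid j"
  using tau_Mid[of x j] tau_Mid[of "tau x" j] by auto

lemma tau_fix_iff:
  assumes "(2::'k::field) \<noteq> 0"
  shows "tau x = (x :: 'k fls) \<longleftrightarrow> (\<forall>i. odd i \<longrightarrow> x $$ i = 0)"
proof
  assume a: "tau x = x"
  show "\<forall>i. odd i \<longrightarrow> x $$ i = 0"
  proof (intro allI impI)
    fix i :: int assume "odd i"
    have "tau x $$ i = - x $$ i" using \<open>odd i\<close> by (simp add: tau_nth sg_even)
    then have "2 * x $$ i = 0" using a by (simp add: algebra_simps mult_2)
    then show "x $$ i = 0" using assms by simp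
  qed
next
  assume "\<forall>i. odd i \<longrightarrow> x $$ i = 0"
  then show "tau x = x" by (intro fls_eqI) (auto simp: tau_nth sg_even)
qed

lemma tau_neg_iff:
  assumes "(2::'k::field) \<noteq> 0"
  shows "tau x = - (x :: 'k fls) \<longleftrightarrow> (\<forall>i. even i \<longrightarrow> x $$ i = 0)"
proof
  assume a: "tau x = - x"
  show "\<forall>i. even i \<longrightarrow> x $$ i = 0"
  proof (intro allI impI)
    fix i :: int assume "even i"
    have "tau x $$ i = x $$ i" using \<open>even i\<close> by (simp add: tau_nth sg_even)
    then have "2 * x $$ i = 0" using a by (simp add: algebra_simps mult_2)
    then show "x $$ i = 0" using assms by simp
  qed
next
  assume "\<forall>i. even i \<longrightarrow> x $$ i = 0"
  then show "tau x = - x" by (intro fls_eqI) (auto simp: tau_nth sg_even)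
qed

lift_definition hf :: "'a::zero fls \<Rightarrow> 'a fls" is "\<lambda>f n. f (2 * n)"
proof -
  fix f :: "int \<Rightarrow> 'a"
  assume "\<forall>\<^sub>\<infinity>n::nat. f (- int n) = 0"
  then have fin: "finite {n::nat. f (- int n) \<noteq> 0}" by (simp add: eventually_cofinite)
  have "{n::nat. f (2 * - int n) \<noteq> 0} \<subseteq> (\<lambda>n. 2 * n) -` {n::nat. f (- int n) \<noteq> 0}" by auto
  moreover have "finite ((\<lambda>n::nat. 2 * n) -` {n::nat. f (- int n) \<noteq> 0})"
    by (rule finite_vimageI[OF fin]) (auto simp: inj_on_def)
  ultimately have "finite {n::nat. f (2 * - int n) \<noteq> 0}" by (rule finite_subset)
  then show "\<forall>\<^sub>\<infinity>n::nat. f (2 * - int n) = 0" by (simp add: eventually_cofinite)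
qed

lemma hf_nth [simp]: "hf x $$ n = x $$ (2 * n)"
  by transfer simp

lemma hf_compose:
  assumes "\<forall>i. odd i \<longrightarrow> x $$ i = 0"
  shows "fls_compose_power (hf x) 2 = x"
  using assms by (intro fls_eqI) (auto simp: fls_nth_compose_power)

lemma F_field_iff:
  assumes "(2::'k::field) \<noteq> 0"
  shows "(x :: 'k fls) \<in> F_field \<longleftrightarrow> tau x = x"
proof
  assume "x \<in> F_field"
  then obtain g where "x = fls_compose_power g 2" by (auto simp: F_field_def)
  then have "\<forall>i. odd i \<longrightarrow> x $$ i = 0" by (auto simp: fls_nth_compose_power)
  then show "tau x = x" using tau_fix_iff[OF assms] by blast
next
  assume "tau x = x"
  then have "\<forall>i. odd i \<longrightarrow> x $$ i = 0" using tau_fix_iff[OF assms] by blast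
  then have "x = fls_compose_power (hf x) 2" by (simp add: hf_compose)
  then show "x \<in> F_field" by (auto simp: F_field_def)
qed

lemma F_units_iff:
  assumes "(2::'k::field) \<noteq> 0"
  shows "(x :: 'k fls) \<in> F_units \<longleftrightarrow> x \<noteq> 0 \<and> tau x = x"
  using F_field_iff[OF assms] by (auto simp: F_units_def)

lemma O_F_iff:
  assumes "(2::'k::field) \<noteq> 0"
  shows "(x :: 'k fls) \<in> O_F \<longleftrightarrow> x \<in> Mid 0 \<and> tau x = x"
proof
  assume "x \<in> O_F"
  then obtain p where p: "x = fls_compose_power (fps_to_fls p) 2" by (auto simp: O_F_def)
  then have "x \<in> F_field" by (auto simp: F_field_def)
  moreover have "x \<in> Mid 0" unfolding p Mid_def
    by (auto simp: fls_nth_compose_power)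
  ultimately show "x \<in> Mid 0 \<and> tau x = x" using F_field_iff[OF assms] by blast
next
  assume a: "x \<in> Mid 0 \<and> tau x = x"
  then have o: "\<forall>i. odd i \<longrightarrow> x $$ i = 0" using tau_fix_iff[OF assms] by blast
  have "hf x \<in> Mid 0" using a by (auto simp: Mid_def)
  then have "hf x \<in> O_E" by (simp add: O_E_Mid)
  then obtain p where "hf x = fps_to_fls p" by (auto simp: O_E_def)
  then have "x = fls_compose_power (fps_to_fls p) 2" using hf_compose[OF o] by simp
  then show "x \<in> O_F" by (auto simp: O_F_def)
qed


lemma charsum_zero:
  fixes psi :: "'a::{ab_group_add,finite} \<Rightarrow> complex"
  assumes add: "\<And>a b. psi (a + b) = psi a * psi b" and zz: "psi zz \<noteq> 1"
  shows "(\<Sum>c\<in>UNIV. psi c) = 0"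
proof -
  have "(\<Sum>c\<in>UNIV. psi c) = (\<Sum>c\<in>UNIV. psi (zz + c))"
    by (rule sum.reindex_bij_witness[where j="\<lambda>c. c - zz" and i="\<lambda>c. zz + c"]) auto
  also have "\<dots> = psi zz * (\<Sum>c\<in>UNIV. psi c)" by (simp add: add sum_distrib_left)
  finally have "(1 - psi zz) * (\<Sum>c\<in>UNIV. psi c) = 0" by (simp add: algebra_simps)
  then show ?thesis using zz by simp
qed

locale Lchi =
  fixes chi :: "'k::{field,finite} fls \<Rightarrow> complex" and n :: nat
  assumes two: "(2::'k) \<noteq> 0"
    and char: "is_character_on E_units chi"
    and npos: "1 \<le> n"
    and lev: "has_level chi (2 * n - 1)"
begin

lemma chi_mult: "x \<noteq> 0 \<Longrightarrow> y \<noteq> 0 \<Longrightarrow> chi (x * y) = chi x * chi y"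
  using char by (auto simp: is_character_on_def E_units_def)

lemma chi_nz: "x \<noteq> 0 \<Longrightarrow> chi x \<noteq> 0"
  using char by (auto simp: is_character_on_def E_units_def)

lemma chi_one [simp]: "chi 1 = 1"
proof -
  have "chi 1 = chi 1 * chi 1" using chi_mult[of 1 1] by simp
  then show ?thesis using chi_nz[of 1] by (metis mult_cancel_left1 zero_neq_one)
qed

lemma chi_triv: "x - 1 \<in> Mid (int (2 * n)) \<Longrightarrow> chi x = 1"
proof -
  assume "x - 1 \<in> Mid (int (2 * n))"
  then have "x \<in> U_E (2 * n - 1 + 1)" using npos by (simp add: U_E_iff)
  then show "chi x = 1" using lev by (auto simp: has_level_def)
qed

lemma CONG:
  assumes x: "x - 1 \<in> Mid 1" and y: "y - 1 \<in> Mid 1" and xy: "x - y \<in> Mid (int (2 * n))"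
  shows "chi x = chi y"
proof -
  define w where "w = x * inverse y"
  have yn: "y \<noteq> 0" using y Mid1_nz by blast
  have xw: "x = y * w" using yn by (simp add: w_def)
  have "w - 1 = (x - y) * inverse y" using yn by (simp add: w_def algebra_simps)
  also have "\<dots> \<in> Mid (int (2 * n))" using Mid_mult[OF xy Mid1_inverse(1)[OF y]] by simp
  finally have "chi w = 1" by (rule chi_triv)
  moreover have "w \<noteq> 0" using Mid1_nz[OF x] xw by auto
  ultimately show ?thesis using xw chi_mult[OF yn] by simp
qed

definition lam :: "'k \<Rightarrow> complex" where
  "lam c = chi (1 + fls_const c * u_E ^ (2 * n - 1))"

lemma Mid_m: "fls_const c * u_E ^ (2 * n - 1) \<in> Mid (int (2 * n - 1))"
  by (rule Mid_mult_const[OF Mid_uE])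

lemma m_ge1: "int (2 * n - 1) \<ge> 1" using npos by simp

lemma U1_m: "(1 + fls_const c * u_E ^ (2 * n - 1)) - 1 \<in> Mid 1"
  using Mid_mono[OF m_ge1 Mid_m] by simp

lemma lam_nz: "lam c \<noteq> 0"
  unfolding lam_def by (rule chi_nz, rule Mid1_nz, rule U1_m)

lemma lam_0 [simp]: "lam 0 = 1" by (simp add: lam_def)

lemma lam_add: "lam (a + b) = lam a * lam b"
proof -
  let ?m = "2 * n - 1"
  have "lam a * lam b = chi ((1 + fls_const a * u_E ^ ?m) * (1 + fls_const b * u_E ^ ?m))"
    unfolding lam_def by (rule chi_mult[symmetric]; rule Mid1_nz, rule U1_m)
  also have "\<dots> = lam (a + b)" unfolding lam_def
  proof (rule CONG)
    show "(1 + fls_const a * u_E ^ ?m) * (1 + fls_const b * u_E ^ ?m) - 1 \<in> Mid 1"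
      by (rule Mid1_mult; rule U1_m)
    show "1 + fls_const (a + b) * u_E ^ ?m - 1 \<in> Mid 1" by (rule U1_m)
    have "(1 + fls_const a * u_E ^ ?m) * (1 + fls_const b * u_E ^ ?m) - (1 + fls_const (a + b) * u_E ^ ?m)
        = (fls_const a * u_E ^ ?m) * (fls_const b * u_E ^ ?m)"
      by (simp add: algebra_simps flip: fls_plus_const)
    also have "\<dots> \<in> Mid (int ?m + int ?m)" by (rule Mid_mult; rule Mid_m)
    finally show "(1 + fls_const a * u_E ^ ?m) * (1 + fls_const b * u_E ^ ?m) - (1 + fls_const (a + b) * u_E ^ ?m) \<in> Mid (int (2 * n))"
      by (rule Mid_mono[rotated]) (use npos in simp)
  qed
  finally show ?thesis by simp
qed

lemma lam_nontriv: "\<exists>w. lam w \<noteq> 1"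
proof -
  have "\<not> (\<forall>x\<in>U_E (2 * n - 1). chi x = 1)"
  proof
    assume a: "\<forall>x\<in>U_E (2 * n - 1). chi x = 1"
    have "2 * n - 2 + 1 = 2 * n - 1" using npos by simp
    then have "\<forall>x\<in>U_E (2 * n - 2 + 1). chi x = 1" using a by simp
    then have "(LEAST l. \<forall>x\<in>U_E (l + 1). chi x = 1) \<le> 2 * n - 2" by (rule Least_le)
    then show False using lev npos by (simp add: has_level_def; linarith)
  qed
  then obtain x where x: "x \<in> U_E (2 * n - 1)" "chi x \<noteq> 1" by blast
  have xm: "x - 1 \<in> Mid (int (2 * n - 1))" using x(1) by (simp add: U_E_iff)
  define y where "y = fls_shift (int (2 * n - 1)) (x - 1)"
  have xy: "x - 1 = u_E ^ (2 * n - 1) * y" by (simp add: y_def u_E_def fls_X_power_times_conv_shift)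
  have y0: "y \<in> Mid 0" using xm by (auto simp: y_def Mid_def)
  define w where "w = y $$ 0"
  have "chi x = lam w" unfolding lam_def
  proof (rule CONG)
    show "x - 1 \<in> Mid 1" using Mid_mono[OF m_ge1 xm] .
    show "1 + fls_const w * u_E ^ (2 * n - 1) - 1 \<in> Mid 1" by (rule U1_m)
    have "y - fls_const w \<in> Mid 1" using y0 by (auto simp: Mid_def w_def)
    then have "u_E ^ (2 * n - 1) * (y - fls_const w) \<in> Mid (int (2 * n - 1) + 1)"
      by (rule Mid_mult[OF Mid_uE])
    moreover have "x - (1 + fls_const w * u_E ^ (2 * n - 1)) = u_E ^ (2 * n - 1) * (y - fls_const w)"
      using xy by (simp add: algebra_simps)
    ultimately show "x - (1 + fls_const w * u_E ^ (2 * n - 1)) \<in> Mid (int (2 * n))"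
      using npos by simp
  qed
  then show ?thesis using x(2) by auto
qed

lemma duality:
  assumes add: "\<And>a b. D (a + b) = D a * D b" and nz: "\<And>a. D a \<noteq> 0"
  shows "\<exists>b. \<forall>c. D c = lam (b * c)"
proof (rule ccontr)
  assume na: "\<not> ?thesis"
  obtain w where w: "lam w \<noteq> 1" using lam_nontriv by blast
  have D0: "D 0 = 1" using add[of 0 0] nz[of 0] by (metis add_0 mult_cancel_left1)
  have s1: "(\<Sum>c\<in>UNIV. D c * inverse (lam (b * c))) = 0" for b
  proof -
    obtain c where c: "D c \<noteq> lam (b * c)" using na by blast
    show ?thesis
  proof (rule charsum_zero[where zz=c])
    show "D (x + y) * inverse (lam (b * (x + y))) = D x * inverse (lam (b * x)) * (D y * inverse (lam (b * y)))" for x y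
      by (simp add: add distrib_left lam_add)
    show "D c * inverse (lam (b * c)) \<noteq> 1" using c lam_nz[of "b * c"] by (auto simp: field_simps)
  qed
  qed
  have s2: "(\<Sum>b\<in>UNIV. inverse (lam (b * c))) = 0" if "c \<noteq> 0" for c
  proof (rule charsum_zero[where zz="w / c"])
    show "inverse (lam ((x + y) * c)) = inverse (lam (x * c)) * inverse (lam (y * c))" for x y
      by (simp add: distrib_right lam_add)
    have "lam (w / c * c) = lam w" using that by simp
    then show "inverse (lam (w / c * c)) \<noteq> 1" using w lam_nz[of w] by (auto simp: field_simps)
  qed
  have "0 = (\<Sum>b\<in>UNIV. \<Sum>c\<in>UNIV. D c * inverse (lam (b * c)))" using s1 by simp
  also have "\<dots> = (\<Sum>c\<in>UNIV. D c * (\<Sum>b\<in>UNIV. inverse (lam (b * c))))"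
    by (subst sum.swap) (simp add: sum_distrib_left)
  also have "\<dots> = (\<Sum>c\<in>{0}. D c * (\<Sum>b\<in>UNIV. inverse (lam (b * c))))"
    by (rule sum.mono_neutral_right) (auto simp: s2)
  also have "\<dots> = of_nat (card (UNIV :: 'k set))" by (simp add: D0)
  finally show False by simp
qed

end

context Lchi begin

lemma F_units_iff': "(x::'k fls) \<in> F_units \<longleftrightarrow> x \<noteq> 0 \<and> tau x = x"
  using F_units_iff[OF two] by blast

lemma one_F [simp]: "(1::'k fls) \<in> F_units" by (simp add: F_units_iff')

lemma F_units_mult: "(a::'k fls) \<in> F_units \<Longrightarrow> b \<in> F_units \<Longrightarrow> a * b \<in> F_units"
  by (simp add: F_units_iff' tau_mult)

lemma two_fls: "(2::'k fls) \<noteq> 0"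
proof
  assume "(2::'k fls) = 0"
  have "(2::'k fls) $$ 0 = 2" by simp
  then show False using \<open>(2::'k fls) = 0\<close> two by simp
qed

lemma rep_unique:
  assumes "(a::'k fls) \<in> F_units" "tau z = - z" "a' \<in> F_units" "tau z' = - z'"
    and e: "a * (1 + z) = a' * (1 + z')"
  shows "a = a' \<and> z = z'"
proof -
  have ta: "tau a = a" "tau a' = a'" "a \<noteq> 0" using assms F_units_iff' by auto
  have "tau (a * (1 + z)) = tau (a' * (1 + z'))" using e by simp
  then have e2: "a * (1 - z) = a' * (1 - z')" using assms(2,4) ta by (simp add: tau_mult tau_add)
  have "a * (1 + z) + a * (1 - z) = a' * (1 + z') + a' * (1 - z')" by (simp only: e e2)
  then have "2 * a = 2 * a'" by (simp add: ring_distribs mult_2_right)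
  then have aa: "a = a'" using two_fls by simp
  then have "1 + z = 1 + z'" using e ta by simp
  then show ?thesis using aa by simp
qed

end

context Lchi begin
lemma FU_iff: "(x::'k fls) \<in> FU K \<longleftrightarrow> (\<exists>a v. a \<in> F_units \<and> v \<in> Mid (int K) \<and> x = a * (1 + v))"
proof
  assume "x \<in> FU K"
  then obtain a y where ay: "a \<in> F_units" "y \<in> U_E K" "x = a * y" unfolding FU_def by blast
  then have "y - 1 \<in> Mid (int K)" "x = a * (1 + (y - 1))" by (simp_all add: U_E_iff)
  then show "\<exists>a v. a \<in> F_units \<and> v \<in> Mid (int K) \<and> x = a * (1 + v)" using ay(1) by blast
next
  assume "\<exists>a v. a \<in> F_units \<and> v \<in> Mid (int K) \<and> x = a * (1 + v)"
  then obtain a v where av: "a \<in> F_units" "v \<in> Mid (int K)" "x = a * (1 + v)" by blast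
  then have "1 + v \<in> U_E K" by (simp add: U_E_iff)
  then show "x \<in> FU K" unfolding FU_def using av by blast
qed

lemma in_FU: "(a::'k fls) \<in> F_units \<Longrightarrow> v \<in> Mid (int K) \<Longrightarrow> a * (1 + v) \<in> FU K"
  unfolding FU_iff by blast

lemma F_in_FU: "(a::'k fls) \<in> F_units \<Longrightarrow> a \<in> FU K"
  using in_FU[of a 0 K] by simp

lemma U_in_FU: "(v::'k fls) \<in> Mid (int K) \<Longrightarrow> 1 + v \<in> FU K"
  using in_FU[of 1 v K] by simp

lemma FU_mono: "K \<le> K' \<Longrightarrow> (x::'k fls) \<in> FU K' \<Longrightarrow> x \<in> FU K"
proof -
  assume "K \<le> K'" "x \<in> FU K'"
  then obtain a v where av: "a \<in> F_units" "v \<in> Mid (int K')" "x = a * (1 + v)"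
    unfolding FU_iff by blast
  have "v \<in> Mid (int K)" using Mid_mono[of "int K" "int K'" v] av(2) \<open>K \<le> K'\<close> by simp
  then show "x \<in> FU K" using in_FU av by blast
qed

lemma FU_mult: assumes "(x::'k fls) \<in> FU K" "y \<in> FU K" shows "x * y \<in> FU K"
proof -
  obtain a v b w where "a \<in> F_units" "v \<in> Mid (int K)" "x = a * (1 + v)"
    "b \<in> F_units" "w \<in> Mid (int K)" "y = b * (1 + w)" using assms FU_iff by metis
  moreover have "v * w \<in> Mid (int K)" using Mid_mult[OF \<open>v \<in> _\<close> \<open>w \<in> _\<close>]
    by (rule Mid_mono[rotated]) simp
  ultimately have "x * y = (a * b) * (1 + (v + w + v * w))" "a * b \<in> F_units"
    "v + w + v * w \<in> Mid (int K)"
    by (simp_all add: algebra_simps F_units_mult Mid_add)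
  then show ?thesis using in_FU by metis
qed

lemma FU_nz: "1 \<le> K \<Longrightarrow> (x::'k fls) \<in> FU K \<Longrightarrow> x \<noteq> 0"
proof -
  assume K: "1 \<le> K" and "x \<in> FU K"
  then obtain a v where av: "a \<in> F_units" "v \<in> Mid (int K)" "x = a * (1 + v)"
    unfolding FU_iff by blast
  have "a \<noteq> 0" using av(1) F_units_iff' by blast
  moreover have "(1 + v) - 1 \<in> Mid 1" using Mid_mono[of 1 "int K" v] av(2) K by simp
  then have "1 + v \<noteq> 0" by (rule Mid1_nz)
  ultimately show "x \<noteq> 0" using av(3) by simp
qed

lemma DEC:
  assumes K: "1 \<le> K" and x: "(x::'k fls) \<in> FU K"
  shows "\<exists>a z. a \<in> F_units \<and> tau z = - z \<and> z \<in> Mid (int K) \<and> x = a * (1 + z)"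
proof -
  obtain b v where bv: "b \<in> F_units" "v \<in> Mid (int K)" "x = b * (1 + v)" using x FU_iff by blast
  define w where "w = 1 + v"
  define E where "E = (w + tau w) * fls_const (inverse 2)"
  define Od where "Od = (w - tau w) * fls_const (inverse 2)"
  have h2: "(c + c) * inverse 2 = (c::'k)" for c
  proof -
    have "c + c = c * 2" by (simp add: mult_2_right)
    then show ?thesis using two by simp
  qed
  have En: "E $$ i = (if even i then w $$ i else 0)" for i
    by (cases "even i") (use two in \<open>simp_all add: E_def tau_nth sg_even h2\<close>)
  have Odn: "Od $$ i = (if even i then 0 else w $$ i)" for i
    by (cases "even i") (use two in \<open>simp_all add: Od_def tau_nth sg_even h2\<close>)
  have wEO: "w = E + Od" by (rule fls_eqI) (simp add: En Odn)
  have tE: "tau E = E" by (simp add: E_def tau_mult tau_add add.commute)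
  have tO: "tau Od = - Od" by (simp add: Od_def tau_mult tau_diff algebra_simps)
  have vK: "\<forall>i<int K. v $$ i = 0" using bv(2) by (simp add: Mid_def)
  have E1: "E - 1 \<in> Mid 1"
  proof -
    have "\<forall>i<1. (E - 1) $$ i = 0"
    proof (intro allI impI)
      fix i :: int assume "i < 1"
      then show "(E - 1) $$ i = 0" using vK K
        by (cases "i = 0") (auto simp: En w_def)
    qed
    then show ?thesis by (simp add: Mid_def)
  qed
  have OK: "Od \<in> Mid (int K)"
    unfolding Mid_def using vK by (auto simp: Odn w_def)
  have Enz: "E \<noteq> 0" using Mid1_nz[OF E1] .
  define z where "z = Od * inverse E"
  define a where "a = b * E"
  have "a \<in> F_units" using bv(1) Enz tE by (simp add: a_def F_units_iff' tau_mult)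
  moreover have "tau z = - z" by (simp add: z_def tau_mult tau_inverse tE tO)
  moreover have "z \<in> Mid (int K)" using Mid_mult[OF OK Mid1_inverse(1)[OF E1]] by (simp add: z_def)
  moreover have "x = a * (1 + z)"
  proof -
    have "E * (Od * inverse E) = Od" using Enz by simp
    then have e: "b * E * (1 + Od * inverse E) = b * (E + Od)" by (simp add: distrib_left mult.assoc)
    show ?thesis unfolding bv(3) a_def z_def w_def[symmetric] using e wEO by (simp del: mult_cancel_left) (metis)
  qed
  ultimately show ?thesis by blast
qed

definition th :: "nat \<Rightarrow> 'k fls \<Rightarrow> 'k fls \<Rightarrow> complex" where
  "th b s x = (let p = (SOME p. fst p \<in> F_units \<and> tau (snd p) = - snd p \<and> snd p \<in> Mid (int b)
                   \<and> x = fst p * (1 + snd p)) in chi (fst p) * chi (1 + snd p * s))"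

lemma th_eq:
  assumes "a \<in> F_units" "tau z = - z" "z \<in> Mid (int b)" "x = a * (1 + z)"
  shows "th b s x = chi a * chi (1 + z * s)"
proof -
  let ?P = "\<lambda>p. fst p \<in> F_units \<and> tau (snd p) = - snd p \<and> snd p \<in> Mid (int b) \<and> x = fst p * (1 + snd p)"
  have "?P (a, z)" using assms by simp
  then have "?P (SOME p. ?P p)" by (rule someI)
  then have "fst (SOME p. ?P p) = a \<and> snd (SOME p. ?P p) = z"
    using rep_unique[of "fst (SOME p. ?P p)" "snd (SOME p. ?P p)" a z] assms(1,2,4) by simp
  then show ?thesis unfolding th_def Let_def by simp
qed

lemma U1_of: "(z::'k fls) \<in> Mid (int b) \<Longrightarrow> 1 \<le> b \<Longrightarrow> s \<in> Mid 0 \<Longrightarrow> (1 + z * s) - 1 \<in> Mid 1"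
  using Mid_mult[of z "int b" s 0] Mid_mono[of 1 "int b"] by simp

lemma th_F: "a \<in> F_units \<Longrightarrow> th b s a = chi a"
  using th_eq[of a 0 b a s] by simp

lemma th_h:
  assumes "odd b" "h \<in> O_F"
  shows "th b s (1 + u_E ^ b * h) = chi (1 + u_E ^ b * h * s)"
proof -
  have h: "h \<in> Mid 0" "tau h = h" using assms(2) O_F_iff[OF two] by auto
  have "tau (u_E ^ b * h) = - (u_E ^ b * h)" using assms(1) h
    by (simp add: tau_mult tau_power tau_uE power_minus_odd)
  moreover have "u_E ^ b * h \<in> Mid (int b)" using Mid_mult[OF Mid_uE h(1)] by simp
  ultimately show ?thesis using th_eq[of 1 "u_E ^ b * h" b "1 + u_E ^ b * h" s] by simp
qed

lemma th_2n:
  assumes b: "1 \<le> b" "b \<le> 2 * n" and s: "s \<in> Mid 0" and x: "x \<in> FU (2 * n)"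
  shows "th b s x = chi x"
proof -
  obtain a z where az: "a \<in> F_units" "tau z = - z" "z \<in> Mid (int (2 * n))" "x = a * (1 + z)"
    using DEC[OF _ x] npos by auto
  have zb: "z \<in> Mid (int b)" using Mid_mono[of "int b" "int (2*n)" z] az(3) b by simp
  have an: "a \<noteq> 0" using az(1) F_units_iff' by auto
  have "chi (1 + z * s) = 1" by (rule chi_triv) (use Mid_mult[OF az(3) s] in simp)
  moreover have "chi (1 + z) = 1" by (rule chi_triv) (use az(3) in simp)
  moreover have "1 + z \<noteq> 0" using Mid1_nz[OF Mid1_plus[OF zb]] b by simp
  ultimately show ?thesis using th_eq[OF az(1,2) zb az(4)] az(4) chi_mult[OF an] by simp
qed

end

context Lchi begin
lemma th_char:
  assumes b: "1 \<le> b" and s: "(s::'k fls) \<in> Mid 0" and ss: "s * s - 1 \<in> Mid (int (2 * n) - 2 * int b)"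
  shows "is_character_on (FU b) (th b s)"
  unfolding is_character_on_def
proof (intro conjI ballI)
  fix x :: "'k fls" assume xb: "x \<in> FU b"
  obtain a z where az: "a \<in> F_units" "tau z = - z" "z \<in> Mid (int b)" "x = a * (1 + z)"
    using DEC[OF b xb] by blast
  have "a \<noteq> 0" using az(1) F_units_iff' by auto
  moreover have "1 + z * s \<noteq> 0" using Mid1_nz[OF U1_of[OF az(3) b s]] .
  ultimately show "th b s x \<noteq> 0" using th_eq[OF az] chi_nz by simp
next
  fix x y :: "'k fls" assume xb: "x \<in> FU b" and yb: "y \<in> FU b"
  obtain a1 z1 a2 z2 where
    r1: "a1 \<in> F_units" "tau z1 = - z1" "z1 \<in> Mid (int b)" "x = a1 * (1 + z1)" and
    r2: "a2 \<in> F_units" "tau z2 = - z2" "z2 \<in> Mid (int b)" "y = a2 * (1 + z2)"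
    using DEC[OF b xb] DEC[OF b yb] by blast
  have a1n: "a1 \<noteq> 0" and a2n: "a2 \<noteq> 0" using r1(1) r2(1) F_units_iff' by auto
  define P where "P = 1 + z1 * z2"
  have zz: "z1 * z2 \<in> Mid (int b + int b)" using Mid_mult[OF r1(3) r2(3)] .
  have P1: "P - 1 \<in> Mid 1" using Mid_mono[of 1 "int b + int b" "z1 * z2"] zz b unfolding P_def by simp
  have Pn: "P \<noteq> 0" using Mid1_nz[OF P1] .
  have tP: "tau P = P" using r1(2) r2(2) by (simp add: P_def tau_add tau_mult)
  define A where "A = a1 * a2 * P"
  define Z where "Z = (z1 + z2) * inverse P"
  have AF: "A \<in> F_units" using r1(1) r2(1) Pn tP by (simp add: A_def F_units_iff' tau_mult)
  have tZ: "tau Z = - Z" using r1(2) r2(2) tP by (simp add: Z_def tau_mult tau_add tau_inverse algebra_simps)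
  have ZM: "Z \<in> Mid (int b)" using Mid_mult[OF Mid_add[OF r1(3) r2(3)] Mid1_inverse(1)[OF P1]]
    by (simp add: Z_def)
  have xy: "x * y = A * (1 + Z)" using Pn
    by (simp add: r1(4) r2(4) A_def Z_def P_def field_simps)
  have u1: "1 + z1 * s \<noteq> 0" "1 + z2 * s \<noteq> 0" "1 + Z * s \<noteq> 0"
    using Mid1_nz[OF U1_of[OF _ b s]] r1(3) r2(3) ZM by auto
  have "th b s (x * y) = chi A * chi (1 + Z * s)" using th_eq[OF AF tZ ZM xy] .
  also have "\<dots> = chi a1 * chi a2 * (chi P * chi (1 + Z * s))"
    using a1n a2n Pn by (simp add: A_def chi_mult)
  also have "chi P * chi (1 + Z * s) = chi (P + (z1 + z2) * s)"
  proof -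
    have "P * (1 + Z * s) = P + (P * inverse P) * (z1 + z2) * s" by (simp add: Z_def algebra_simps)
    also have "\<dots> = P + (z1 + z2) * s" using Pn by simp
    finally show ?thesis using chi_mult[OF Pn u1(3)] by simp
  qed
  also have "\<dots> = chi ((1 + z1 * s) * (1 + z2 * s))"
  proof (rule CONG)
    show "P + (z1 + z2) * s - 1 \<in> Mid 1"
    proof -
      have "P + (z1 + z2) * s - 1 = (P - 1) + ((1 + z1 * s) - 1) + ((1 + z2 * s) - 1)"
        by (simp add: algebra_simps)
      then show ?thesis using P1 U1_of[OF r1(3) b s] U1_of[OF r2(3) b s] by (metis Mid_add)
    qed
    show "(1 + z1 * s) * (1 + z2 * s) - 1 \<in> Mid 1"
      using Mid1_mult U1_of[OF r1(3) b s] U1_of[OF r2(3) b s] by blast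
    have "P + (z1 + z2) * s - (1 + z1 * s) * (1 + z2 * s) = - ((z1 * z2) * (s * s - 1))"
      by (simp add: P_def algebra_simps)
    moreover have "(z1 * z2) * (s * s - 1) \<in> Mid (int b + int b + (int (2 * n) - 2 * int b))"
      by (rule Mid_mult[OF zz ss])
    ultimately show "P + (z1 + z2) * s - (1 + z1 * s) * (1 + z2 * s) \<in> Mid (int (2 * n))"
      by simp
  qed
  also have "chi a1 * chi a2 * chi ((1 + z1 * s) * (1 + z2 * s)) = th b s x * th b s y"
    using th_eq[OF r1, of s] th_eq[OF r2, of s] u1 chi_mult by simp
  finally show "th b s (x * y) = th b s x * th b s y" .
qed

end

lemma cong_u_Mid: "cong_u x y j \<longleftrightarrow> x - y \<in> Mid j"
  by (simp add: cong_u_def Mid_def)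

context Lchi begin

lemma odd_Mid_up:
  assumes "tau z = - (z::'k fls)" "z \<in> Mid (2 * k)"
  shows "z \<in> Mid (2 * k + 1)"
proof -
  have "\<forall>i. even i \<longrightarrow> z $$ i = 0" using assms(1) tau_neg_iff[OF two] by blast
  show ?thesis unfolding Mid_def
  proof (intro allI impI CollectI)
    fix i assume i: "i < 2 * k + 1"
    show "z $$ i = 0"
    proof (cases "i < 2 * k")
      case True then show ?thesis using assms(2) by (simp add: Mid_def)
    next
      case False then have "i = 2 * k" using i by simp
      then show ?thesis using \<open>\<forall>i. even i \<longrightarrow> z $$ i = 0\<close> by simp
    qed
  qed
qed

lemma O_F_iff': "(x::'k fls) \<in> O_F \<longleftrightarrow> x \<in> Mid 0 \<and> tau x = x"
  using O_F_iff[OF two] by blast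

lemma shift_odd:
  assumes "tau z = - (z::'k fls)" "z \<in> Mid (int b)" "odd b"
  shows "fls_shift (int b) z \<in> O_F" "z = u_E ^ b * fls_shift (int b) z"
proof -
  have ev: "\<forall>i. even i \<longrightarrow> z $$ i = 0" using assms(1) tau_neg_iff[OF two] by blast
  have "\<forall>i. odd i \<longrightarrow> fls_shift (int b) z $$ i = 0"
    using ev assms(3) by simp
  then have "tau (fls_shift (int b) z) = fls_shift (int b) z" using tau_fix_iff[OF two] by blast
  moreover have "fls_shift (int b) z \<in> Mid 0" using assms(2) by (auto simp: Mid_def)
  ultimately show "fls_shift (int b) z \<in> O_F" by (simp add: O_F_iff')
  show "z = u_E ^ b * fls_shift (int b) z" by (simp add: u_E_def fls_X_power_times_conv_shift)
qed

lemma Rp_props: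
  assumes al: "\<alpha> < n" and s: "(s::'k fls) \<in> R_alpha_tau' (2 * n - 1) \<alpha>"
  shows "s \<in> Mid 0" "tau s = s" "s \<in> O_F"
    "s * s - 1 \<in> Mid (int (2 * n) - 2 * int (2 * \<alpha> + 1))"
    "\<alpha> < n div 2 \<Longrightarrow> s $$ 0 = 1 \<Longrightarrow> s - 1 \<in> Mid (int (2 * n) - 2 * int (2 * \<alpha> + 1))"
    "\<alpha> < n div 2 \<Longrightarrow> s $$ 0 = -1 \<Longrightarrow> s + 1 \<in> Mid (int (2 * n) - 2 * int (2 * \<alpha> + 1))"
proof -
  let ?e = "int (2 * n) - 2 * int (2 * \<alpha> + 1)"
  have e: "int (2 * n - 1) + 1 - 2 * (2 * int \<alpha> + 1) = ?e" using npos by simp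
  have sR: "s \<in> R_alpha (2 * n - 1) \<alpha>" "tau s = s"
    and sc: "?e \<le> 0 \<or> s - 1 \<in> Mid ?e \<or> s + 1 \<in> Mid ?e"
    using s unfolding R_alpha_tau'_def R_alpha_tau_def Let_def e cong_u_Mid by auto
  show s0: "s \<in> Mid 0" using sR(1) unfolding R_alpha_def Mid_def by force
  show "tau s = s" by (rule sR(2))
  then show "s \<in> O_F" using s0 by (simp add: O_F_iff')
  have ss: "s * s - 1 = (s - 1) * (s + 1)" by (simp add: algebra_simps)
  have s1: "s - 1 \<in> Mid 0" "s + 1 \<in> Mid 0" using s0 by (auto intro: Mid_add Mid_diff)
  show "s * s - 1 \<in> Mid ?e"
    using sc
  proof (elim disjE)
    assume "?e \<le> 0" then show ?thesis using Mid_mult[OF s1] ss Mid_mono[of ?e 0 "s * s - 1"] by simp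
  next
    assume "s - 1 \<in> Mid ?e" then show ?thesis using Mid_mult[of "s - 1" ?e "s + 1" 0] s1 ss by simp
  next
    assume "s + 1 \<in> Mid ?e" then show ?thesis using Mid_mult[of "s - 1" 0 "s + 1" ?e] s1 ss by simp
  qed
  have epos: "\<alpha> < n div 2 \<Longrightarrow> 0 < ?e" by presburger
  show "s - 1 \<in> Mid ?e" if "\<alpha> < n div 2" "s $$ 0 = 1"
  proof -
    have "s + 1 \<notin> Mid ?e"
    proof
      assume "s + 1 \<in> Mid ?e"
      then have "(s + 1) $$ 0 = 0" using epos[OF that(1)] unfolding Mid_def by blast
      then have "s $$ 0 + 1 = 0" by simp
      then have "(2::'k) = 0" using that(2) by simp
      then show False using two by simp
    qed
    then show ?thesis using sc epos[OF that(1)] by auto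
  qed
  show "s + 1 \<in> Mid ?e" if "\<alpha> < n div 2" "s $$ 0 = -1"
  proof -
    have "s - 1 \<notin> Mid ?e"
    proof
      assume "s - 1 \<in> Mid ?e"
      then have "(s - 1) $$ 0 = 0" using epos[OF that(1)] unfolding Mid_def by blast
      then have "s $$ 0 - 1 = 0" by simp
      then have "(2::'k) = 0" using that(2) by (simp add: algebra_simps)
      then show False using two by simp
    qed
    then show ?thesis using sc epos[OF that(1)] by auto
  qed
qed

end

context Lchi begin

lemma th_tau_part:
  assumes al: "\<alpha> < n div 2" and s: "(s::'k fls) \<in> R_alpha_tau' (2 * n - 1) \<alpha>"
    and i: "i \<in> {0, 1::nat}" and s0: "s $$ 0 = (-1) ^ i"
    and x: "x \<in> FU (2 * (2 * \<alpha> + 1))"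
  shows "th (2 * \<alpha> + 1) s x = chi ((tau ^^ i) x)"
proof -
  let ?b = "2 * \<alpha> + 1"
  let ?e = "int (2 * n) - 2 * int (2 * \<alpha> + 1)"
  have aln: "\<alpha> < n" using al by simp
  have sM: "s \<in> Mid 0" using Rp_props(1)[OF aln s] .
  obtain a z where az: "a \<in> F_units" "tau z = - z" "z \<in> Mid (int (2 * ?b))" "x = a * (1 + z)"
    using DEC[OF _ x] by auto
  have z2: "z \<in> Mid (2 * int ?b)" using az(3) by simp
  have z3: "z \<in> Mid (2 * int ?b + 1)" by (rule odd_Mid_up[OF az(2) z2])
  have zb: "z \<in> Mid (int ?b)" using Mid_mono[of "int ?b" "2 * int ?b" z] z2 by simp
  have an: "a \<noteq> 0" and ta: "tau a = a" using az(1) F_units_iff' by auto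
  have thx: "th ?b s x = chi a * chi (1 + z * s)" by (rule th_eq[OF az(1,2) zb az(4)])
  have u1: "(1 + z * s) - 1 \<in> Mid 1" by (rule U1_of[OF zb _ sM]) simp
  have u2: "(1 + z) - 1 \<in> Mid 1" "(1 + - z) - 1 \<in> Mid 1"
    using Mid1_plus[OF zb] Mid1_plus[of "- z" "int ?b"] zb by simp_all
  have ee: "2 * int ?b + 1 + ?e = int (2 * n) + 1" by simp
  show ?thesis
  proof (cases "i = 0")
    case True
    then have "s - 1 \<in> Mid ?e" using Rp_props(5)[OF aln s al] s0 by simp
    then have "z * (s - 1) \<in> Mid (int (2 * n) + 1)" using Mid_mult[OF z3] ee by metis
    then have "(1 + z * s) - (1 + z) \<in> Mid (int (2 * n))"
      by (auto simp: algebra_simps intro: Mid_mono[of _ "int (2 * n) + 1"])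
    then have "chi (1 + z * s) = chi (1 + z)" using CONG u1 u2(1) by blast
    moreover have "1 + z \<noteq> 0" using Mid1_nz[OF u2(1)] .
    ultimately show ?thesis using True thx az(4) chi_mult[OF an] by simp
  next
    case False
    then have i1: "i = 1" using i by auto
    then have "s + 1 \<in> Mid ?e" using Rp_props(6)[OF aln s al] s0 by simp
    then have "z * (s + 1) \<in> Mid (int (2 * n) + 1)" using Mid_mult[OF z3] ee by metis
    then have "(1 + z * s) - (1 + - z) \<in> Mid (int (2 * n))"
      by (auto simp: algebra_simps intro: Mid_mono[of _ "int (2 * n) + 1"])
    then have "chi (1 + z * s) = chi (1 + - z)" using CONG u1 u2(2) by blast
    moreover have "1 + - z \<noteq> 0" using Mid1_nz[OF u2(2)] .
    moreover have "tau x = a * (1 + - z)" using az(2,4) ta by (simp add: tau_mult tau_add)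
    ultimately show ?thesis using i1 thx chi_mult[OF an] by simp
  qed
qed

lemma part1_chi_s:
  assumes al: "\<alpha> < n" and s: "(s::'k fls) \<in> R_alpha_tau' (2 * n - 1) \<alpha>"
  shows "is_chi_s chi n \<alpha> s (th (2 * \<alpha> + 1) s)"
proof -
  let ?b = "2 * \<alpha> + 1"
  have sM: "s \<in> Mid 0" using Rp_props(1)[OF al s] .
  have m1: "2 * n - 1 + 1 = 2 * n" using npos by simp
  show ?thesis unfolding is_chi_s_def Let_def m1
  proof (intro conjI ballI allI impI)
    show "is_character_on (FU ?b) (th ?b s)"
      by (rule th_char[OF _ sM Rp_props(4)[OF al s]]) simp
  next
    fix x :: "'k fls" assume "x \<in> FU (2 * n)"
    then show "th ?b s x = chi x" by (rule th_2n[rotated 2, OF sM]) (use al in simp_all)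
  next
    fix i :: nat and x :: "'k fls"
    assume "\<alpha> < n div 2" "i \<in> {0, 1}" "s $$ 0 = (-1) ^ i" "x \<in> FU (2 * ?b)"
    then show "th ?b s x = chi ((tau ^^ i) x)" using th_tau_part s by blast
  next
    fix h s' :: "'k fls" assume h: "h \<in> O_F" and l: "is_lift (2 * n - 1) \<alpha> s s'"
    have hM: "h \<in> Mid 0" using h O_F_iff' by blast
    have l1: "s' \<in> O_F" "s' - s \<in> Mid (int (2 * n - 1) - 2 * int \<alpha>)"
      using l by (auto simp: is_lift_def cong_u_Mid)
    have s'M: "s' \<in> Mid 0" using l1(1) O_F_iff' by blast
    have th1: "th ?b s (1 + u_E ^ ?b * h) = chi (1 + u_E ^ ?b * h * s)" by (rule th_h[OF _ h]) simp
    have uh: "u_E ^ ?b * h \<in> Mid (int ?b)" using Mid_mult[OF Mid_uE[of ?b] hM] by (simp only: add_0_right)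
    have "chi (1 + u_E ^ ?b * h * s) = chi (1 + u_E ^ ?b * h * s')"
    proof (rule CONG)
      show "1 + u_E ^ ?b * h * s - 1 \<in> Mid 1" using U1_of[OF uh _ sM] by simp
      show "1 + u_E ^ ?b * h * s' - 1 \<in> Mid 1" using U1_of[OF uh _ s'M] by simp
      have "u_E ^ ?b * h * (s' - s) \<in> Mid (int ?b + (int (2 * n - 1) - 2 * int \<alpha>))"
        by (rule Mid_mult[OF uh l1(2)])
      moreover have "int ?b + (int (2 * n - 1) - 2 * int \<alpha>) = int (2 * n)" using npos by simp
      moreover have "1 + u_E ^ ?b * h * s - (1 + u_E ^ ?b * h * s') = - (u_E ^ ?b * h * (s' - s))"
        by (simp add: algebra_simps)
      ultimately show "1 + u_E ^ ?b * h * s - (1 + u_E ^ ?b * h * s') \<in> Mid (int (2 * n))" by simp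
    qed
    then show "th ?b s (1 + u_E ^ ?b * h) = chi (1 + u_E ^ ?b * h * s')" using th1 by simp
  qed
qed

lemma UNIQ:
  assumes b: "odd b" and c: "is_character_on (FU b) \<theta>"
    and F: "\<forall>x\<in>FU (2 * n). \<theta> x = chi x" and bn: "b \<le> 2 * n"
    and H: "\<forall>h\<in>O_F. \<theta> (1 + u_E ^ b * h) = chi (1 + u_E ^ b * h * s)"
  shows "\<forall>x\<in>FU b. \<theta> x = th b s (x::'k fls)"
proof
  fix x :: "'k fls" assume x: "x \<in> FU b"
  have b1: "1 \<le> b" using b by (cases b) auto
  obtain a z where az: "a \<in> F_units" "tau z = - z" "z \<in> Mid (int b)" "x = a * (1 + z)"
    using DEC[OF b1 x] by blast
  define h where "h = fls_shift (int b) z"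
  have h: "h \<in> O_F" "z = u_E ^ b * h" using shift_odd[OF az(2,3) b] by (simp_all add: h_def)
  have aF: "a \<in> FU b" "a \<in> FU (2 * n)" using az(1) F_in_FU by auto
  have zF: "1 + z \<in> FU b" using U_in_FU[OF az(3)] .
  have "\<theta> x = \<theta> a * \<theta> (1 + z)" using c aF(1) zF az(4) by (simp add: is_character_on_def)
  also have "\<theta> a = chi a" using F aF(2) by blast
  also have "\<theta> (1 + z) = chi (1 + z * s)" using H h by simp
  also have "chi a * chi (1 + z * s) = th b s x" using th_eq[OF az] by simp
  finally show "\<theta> x = th b s x" .
qed

lemma chi_s_D:
  assumes "is_chi_s chi n \<alpha> s \<theta>" "(s::'k fls) \<in> O_F"
  shows "is_character_on (FU (2 * \<alpha> + 1)) \<theta>" "\<forall>x\<in>FU (2 * n). \<theta> x = chi x"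
    "\<forall>h\<in>O_F. \<theta> (1 + u_E ^ (2 * \<alpha> + 1) * h) = chi (1 + u_E ^ (2 * \<alpha> + 1) * h * s)"
proof -
  have m1: "2 * n - 1 + 1 = 2 * n" using npos by simp
  have l: "is_lift (2 * n - 1) \<alpha> s s" using assms(2) by (simp add: is_lift_def cong_u_Mid)
  show "is_character_on (FU (2 * \<alpha> + 1)) \<theta>" "\<forall>x\<in>FU (2 * n). \<theta> x = chi x"
    using assms(1) unfolding is_chi_s_def Let_def m1 by auto
  show "\<forall>h\<in>O_F. \<theta> (1 + u_E ^ (2 * \<alpha> + 1) * h) = chi (1 + u_E ^ (2 * \<alpha> + 1) * h * s)"
    using assms(1) l unfolding is_chi_s_def Let_def by blast
qed

end

context Lchi begin

lemma tau_uE_even: "tau ((u_E :: 'k fls) ^ (2 * j)) = u_E ^ (2 * j)"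
  by (simp add: tau_power tau_uE)

lemma tau_uE_odd: "odd j \<Longrightarrow> tau ((u_E :: 'k fls) ^ j) = - (u_E ^ j)"
  by (simp add: tau_power tau_uE power_minus_odd)

lemma even_Mid_up:
  assumes "tau z = (z::'k fls)" "z \<in> Mid (2 * k + 1)"
  shows "z \<in> Mid (2 * k + 2)"
proof -
  have ev: "\<forall>i. odd i \<longrightarrow> z $$ i = 0" using assms(1) tau_fix_iff[OF two] by blast
  show ?thesis unfolding Mid_def
  proof (intro allI impI CollectI)
    fix i assume i: "i < 2 * k + 2"
    show "z $$ i = 0"
    proof (cases "i < 2 * k + 1")
      case True then show ?thesis using assms(2) by (simp add: Mid_def)
    next
      case False then have "i = 2 * k + 1" using i by simp
      then show ?thesis using ev by simp
    qed
  qed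
qed

lemma constpow_O_F: "fls_const c * u_E ^ (2 * k) \<in> (O_F :: 'k fls set)"
proof -
  have "fls_const c * u_E ^ (2 * k) \<in> (Mid (int (2 * k)) :: 'k fls set)"
    by (rule Mid_mult_const[OF Mid_uE])
  then have "fls_const c * u_E ^ (2 * k) \<in> (Mid 0 :: 'k fls set)" by (rule Mid_mono[rotated]) simp
  then show ?thesis unfolding O_F_iff' by (simp add: tau_mult tau_uE_even)
qed

lemma chi_tau_2n:
  assumes x: "(x::'k fls) \<in> FU (2 * n)"
  shows "chi (tau x) = chi x"
proof -
  obtain a z where az: "a \<in> F_units" "tau z = - z" "z \<in> Mid (int (2 * n))" "x = a * (1 + z)"
    using DEC[OF _ x] npos by auto
  have an: "a \<noteq> 0" and ta: "tau a = a" using az(1) F_units_iff' by auto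
  have z1: "(1 + z) - 1 \<in> Mid 1" "(1 + - z) - 1 \<in> Mid 1"
    using Mid1_plus[OF az(3)] Mid1_plus[of "- z" "int (2 * n)"] az(3) npos by simp_all
  have "chi (1 + z) = 1" by (rule chi_triv) (use az(3) in simp)
  moreover have "chi (1 + - z) = 1" by (rule chi_triv) (use az(3) in simp)
  moreover have "tau x = a * (1 + - z)" using az(2,4) ta by (simp add: tau_mult tau_add)
  ultimately show ?thesis using az(4) chi_mult[OF an] Mid1_nz[OF z1(1)] Mid1_nz[OF z1(2)] by simp
qed

lemma SEP:
  assumes al: "\<alpha> < n" and s1: "(s1::'k fls) \<in> R_alpha_tau' (2 * n - 1) \<alpha>"
    and s2: "s2 \<in> R_alpha_tau' (2 * n - 1) \<alpha>"
    and H: "\<forall>h\<in>O_F. chi (1 + u_E ^ (2 * \<alpha> + 1) * h * s1) = chi (1 + u_E ^ (2 * \<alpha> + 1) * h * s2)"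
  shows "s1 = s2"
proof (rule ccontr)
  assume ne: "s1 \<noteq> s2"
  let ?b = "2 * \<alpha> + 1"
  let ?m = "2 * n - 1"
  define N where "N = n - \<alpha>"
  define d where "d = s1 - s2"
  have dnz: "d \<noteq> 0" using ne by (simp add: d_def)
  have sM: "s1 \<in> Mid 0" "s2 \<in> Mid 0" using Rp_props(1)[OF al s1] Rp_props(1)[OF al s2] .
  have td: "tau d = d" using Rp_props(2)[OF al s1] Rp_props(2)[OF al s2] by (simp add: d_def tau_diff)
  have r1: "\<forall>i. s1 $$ i \<noteq> 0 \<longrightarrow> 0 \<le> i \<and> i < int ?m - 2 * int \<alpha>"
    using s1 by (simp add: R_alpha_tau'_def R_alpha_tau_def R_alpha_def)
  have r2: "\<forall>i. s2 $$ i \<noteq> 0 \<longrightarrow> 0 \<le> i \<and> i < int ?m - 2 * int \<alpha>"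
    using s2 by (simp add: R_alpha_tau'_def R_alpha_tau_def R_alpha_def)
  have supp: "d $$ i \<noteq> 0 \<Longrightarrow> i < int ?m - 2 * int \<alpha>" for i
  proof -
    assume "d $$ i \<noteq> 0"
    then have "s1 $$ i \<noteq> 0 \<or> s2 $$ i \<noteq> 0" by (auto simp: d_def)
    then show ?thesis using r1 r2 by blast
  qed
  define j0 where "j0 = fls_subdegree d"
  have dj0: "d $$ j0 \<noteq> 0" using dnz by (simp add: j0_def)
  have j0pos: "0 \<le> j0" using dj0 sM unfolding d_def Mid_def by (cases "j0 < 0") auto
  have j0ev: "even j0" using dj0 td tau_fix_iff[OF two] by blast
  obtain jj :: nat where jj: "j0 = 2 * int jj" using j0pos j0ev
    by (metis evenE nonneg_int_cases mult_nonneg_nonneg zero_le_numeral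
        nat_0_le nat_eq_iff2 nat_mult_distrib nat_numeral nat_int)
  have jjN: "jj \<le> N - 1" using supp[OF dj0] jj al unfolding N_def by simp
  define c0 where "c0 = d $$ j0"
  obtain w where w: "lam w \<noteq> 1" using lam_nontriv by blast
  define p where "p = 2 * (N - 1 - jj)"
  define h where "h = fls_const (w / c0) * u_E ^ p"
  have hO: "h \<in> O_F" unfolding h_def p_def by (rule constpow_O_F)
  have hM: "h \<in> Mid 0" using hO O_F_iff' by blast
  define d' where "d' = d - fls_const c0 * u_E ^ (2 * jj)"
  have d'M: "d' \<in> Mid (2 * int jj + 1)"
    unfolding Mid_def
  proof (intro allI impI CollectI)
    fix i assume "i < 2 * int jj + 1"
    then consider "i < j0" | "i = j0" using jj by linarith
    then show "d' $$ i = 0"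
    proof cases
      case 1 then show ?thesis using jj by (simp add: d'_def j0_def u_E_def)
    next
      case 2 then show ?thesis using jj by (simp add: d'_def c0_def u_E_def)
    qed
  qed
  have exps: "?b + p + 2 * jj = ?m" using jjN al unfolding p_def N_def by simp
  have c0nz: "c0 \<noteq> 0" using dj0 c0_def by simp
  have ubh: "u_E ^ ?b * h * d = fls_const w * u_E ^ ?m + fls_const (w / c0) * (u_E ^ (?b + p) * d')"
  proof -
    have "u_E ^ ?b * h * d = fls_const (w / c0) * u_E ^ (?b + p) * (fls_const c0 * u_E ^ (2 * jj) + d')"
      by (simp add: h_def d'_def power_add mult_ac)
    also have "\<dots> = (fls_const (w / c0) * fls_const c0) * u_E ^ (?b + p + 2 * jj) + fls_const (w / c0) * (u_E ^ (?b + p) * d')"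
      by (simp only: algebra_simps power_add)
    also have "fls_const (w / c0) * fls_const c0 = fls_const w" using c0nz by simp
    finally show ?thesis unfolding exps .
  qed
  define r where "r = fls_const (w / c0) * (u_E ^ (?b + p) * d')"
  have rM: "r \<in> Mid (int (2 * n))"
  proof -
    have "u_E ^ (?b + p) * d' \<in> Mid (int (?b + p) + (2 * int jj + 1))" by (rule Mid_mult[OF Mid_uE d'M])
    moreover have "int (?b + p) + (2 * int jj + 1) = int (2 * n)" using exps npos by simp
    ultimately show ?thesis unfolding r_def by (simp add: Mid_mult_const)
  qed
  have uh: "u_E ^ ?b * h \<in> Mid (int ?b)" using Mid_mult[OF Mid_uE[of ?b] hM] by (simp only: add_0_right)
  define A where "A = u_E ^ ?b * h * s2"
  define B where "B = u_E ^ ?b * h * s1"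
  define W where "W = fls_const w * u_E ^ ?m"
  have AM: "A \<in> Mid 1" using U1_of[OF uh _ sM(2)] by (simp add: A_def)
  have BM: "B \<in> Mid 1" using U1_of[OF uh _ sM(1)] by (simp add: B_def)
  have WM: "W \<in> Mid (int ?m)" unfolding W_def by (rule Mid_m)
  have BA: "B - A = W + r" using ubh by (simp add: A_def B_def W_def r_def d_def algebra_simps)
  have "chi (1 + B) = chi ((1 + A) * (1 + W))"
  proof (rule CONG)
    show "1 + B - 1 \<in> Mid 1" using BM by simp
    show "(1 + A) * (1 + W) - 1 \<in> Mid 1" using Mid1_mult[of "1 + A" "1 + W"] AM U1_m[of w]
      by (simp add: W_def)
    have "1 + B - (1 + A) * (1 + W) = r - A * W" using BA by (simp add: algebra_simps)
    moreover have "A * W \<in> Mid (int (2 * n))" using Mid_mult[OF AM WM] npos by simp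
    ultimately show "1 + B - (1 + A) * (1 + W) \<in> Mid (int (2 * n))" using rM by (simp add: Mid_diff)
  qed
  also have "\<dots> = chi (1 + A) * lam w"
    using chi_mult[OF Mid1_nz[of "1 + A"] Mid1_nz[OF U1_m[of w]]] AM by (simp add: lam_def W_def)
  finally have "chi (1 + A) * lam w = chi (1 + A)" using H hO by (simp add: A_def B_def)
  moreover have "chi (1 + A) \<noteq> 0" by (rule chi_nz, rule Mid1_nz) (use AM in simp)
  ultimately show False using w by simp
qed

end

context Lchi begin

definition inv :: "nat \<Rightarrow> nat \<Rightarrow> 'k fls \<Rightarrow> bool" where
  "inv \<alpha> i s \<longleftrightarrow> s \<in> R_alpha (2 * n - 1) \<alpha> \<and> tau s = s \<and>
     (\<alpha> < n div 2 \<longrightarrow> s - fls_const ((-1) ^ i) \<in> Mid (int (2 * n) - 2 * int (2 * \<alpha> + 1)))"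

lemma inv_R':
  assumes "inv \<alpha> i s" "i \<in> {0, 1}"
  shows "s \<in> R_alpha_tau' (2 * n - 1) \<alpha>"
proof -
  let ?e = "int (2 * n) - 2 * int (2 * \<alpha> + 1)"
  have e: "int (2 * n - 1) + 1 - 2 * (2 * int \<alpha> + 1) = ?e" using npos by simp
  have "?e \<le> 0 \<or> cong_u s 1 ?e \<or> cong_u s (-1) ?e"
  proof (cases "?e \<le> 0")
    case False
    then have "\<alpha> < n div 2" by presburger
    then have "s - fls_const ((-1) ^ i) \<in> Mid ?e" using assms(1) by (simp add: inv_def)
    then show ?thesis using assms(2) by (auto simp: cong_u_Mid)
  qed simp
  then show ?thesis using assms(1) unfolding R_alpha_tau'_def R_alpha_tau_def Let_def e inv_def
    by blast
qed

lemma STEP: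
  assumes al: "\<alpha> < n" and th_c: "is_character_on (FU (2 * \<alpha> + 1)) \<theta>"
    and i: "i \<in> {0, 1}"
    and JN: "J + 1 \<le> n - \<alpha>" and Ja: "\<alpha> < n div 2 \<Longrightarrow> J \<le> \<alpha>"
    and sI: "inv \<alpha> i s"
    and IH: "\<forall>x\<in>FU (2 * \<alpha> + 1 + 2 * (J + 1)). \<theta> x = th (2 * \<alpha> + 1) s x"
  shows "\<exists>s'. inv \<alpha> i s' \<and> (\<forall>x\<in>FU (2 * \<alpha> + 1 + 2 * J). \<theta> x = th (2 * \<alpha> + 1) s' x)"
proof -
  let ?b = "2 * \<alpha> + 1"
  let ?m = "2 * n - 1"
  define L where "L = ?b + 2 * J"
  define K' where "K' = ?b + 2 * (J + 1)"
  define p where "p = 2 * (n - \<alpha> - 1 - J)"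
  have Lp: "L + p = ?m" using JN al unfolding L_def p_def by simp
  have Kp: "int K' + int p = int (2 * n) + 1" using JN al unfolding K'_def p_def by simp
  have LK: "K' = L + 2" by (simp add: L_def K'_def)
  have oddL: "odd L" by (simp add: L_def)
  have L1: "1 \<le> L" by (simp add: L_def)
  have sR: "s \<in> R_alpha_tau' (2 * n - 1) \<alpha>" using inv_R'[OF sI i] .
  have sM: "s \<in> Mid 0" using Rp_props(1)[OF al sR] .
  have tc: "is_character_on (FU ?b) (th ?b s)"
    by (rule th_char[OF _ sM Rp_props(4)[OF al sR]]) simp
  define X where "X = (u_E :: 'k fls) ^ L"
  have XM: "X \<in> Mid (int L)" by (simp add: X_def Mid_uE)
  have tX: "tau X = - X" using tau_uE_odd[OF oddL] by (simp add: X_def)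
  define g where "g c = 1 + fls_const c * X" for c
  have gM: "g c - 1 \<in> Mid (int L)" for c by (simp add: g_def Mid_mult_const[OF XM])
  have g1: "g c - 1 \<in> Mid 1" for c using Mid_mono[OF _ gM[of c]] L1 by simp
  have gnz: "g c \<noteq> 0" for c using Mid1_nz[OF g1] .
  have gFU: "g c \<in> FU ?b" for c
    using U_in_FU[of "g c - 1" ?b] Mid_mono[OF _ gM[of c], of "int ?b"] by (simp add: L_def)
  have gh: "g c = 1 + u_E ^ ?b * (fls_const c * u_E ^ (2 * J))" for c
    by (simp add: g_def X_def L_def power_add mult_ac)
  have hO: "fls_const (c::'k) * u_E ^ (2 * J) \<in> O_F" for c by (rule constpow_O_F)
  have th_nz: "\<theta> x \<noteq> 0" if "x \<in> FU ?b" for x using th_c that by (simp add: is_character_on_def)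
  have th_m: "\<theta> (x * y) = \<theta> x * \<theta> y" if "x \<in> FU ?b" "y \<in> FU ?b" for x y
    using th_c that by (simp add: is_character_on_def)
  have ts_nz: "th ?b s x \<noteq> 0" if "x \<in> FU ?b" for x using tc that by (simp add: is_character_on_def)
  have ts_m: "th ?b s (x * y) = th ?b s x * th ?b s y" if "x \<in> FU ?b" "y \<in> FU ?b" for x y
    using tc that by (simp add: is_character_on_def)
  have KFU: "x \<in> FU K' \<Longrightarrow> x \<in> FU ?b" for x :: "'k fls" using FU_mono[of ?b K' x] by (simp add: K'_def)
  have GG: "\<exists>y. y \<in> FU K' \<and> g c1 * g c2 = g (c1 + c2) * y" for c1 c2
  proof -
    define f where "f = 1 + fls_const (c1 * c2) * (X * X)"
    have XX: "X * X \<in> Mid (int L + int L)" by (rule Mid_mult[OF XM XM])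
    have f1: "f - 1 \<in> Mid 1" using Mid_mono[OF _ Mid_mult_const[OF XX]] L1 by (simp add: f_def)
    have fnz: "f \<noteq> 0" using Mid1_nz[OF f1] .
    have fF: "f \<in> F_units" using fnz tX by (simp add: F_units_iff' f_def tau_add tau_mult)
    define v where "v = - (fls_const ((c1 + c2) * c1 * c2) * (X * X * X)) * inverse (g (c1 + c2)) * inverse f"
    define Q where "Q = fls_const ((c1 + c2) * c1 * c2) * (X * X * X)"
    have d1: "g c1 * g c2 - g (c1 + c2) * f = - Q"
      by (simp add: Q_def g_def f_def algebra_simps flip: fls_plus_const fls_const_mult_const)
    have d2: "g (c1 + c2) * (f * v) = - Q"
      using gnz[of "c1 + c2"] fnz by (simp add: v_def Q_def field_simps)
    have gy: "g c1 * g c2 = g (c1 + c2) * (f * (1 + v))"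
    proof -
      have "g (c1 + c2) * (f * (1 + v)) = g (c1 + c2) * f + g (c1 + c2) * (f * v)"
        by (simp add: algebra_simps)
      then show ?thesis using d1 d2 by (simp add: algebra_simps)
    qed
    have "X * X * X \<in> Mid (int L + int L + int L)" by (rule Mid_mult[OF XX XM])
    then have "fls_const ((c1 + c2) * c1 * c2) * (X * X * X) \<in> Mid (int L + int L + int L)"
      by (rule Mid_mult_const)
    then have "v \<in> Mid (int L + int L + int L + 0 + 0)" unfolding v_def
      by (intro Mid_mult Mid1_inverse(1) g1 f1) simp
    then have "v \<in> Mid (int K')" by (rule Mid_mono[rotated]) (use L1 LK in simp)
    then have "f * (1 + v) \<in> FU K'" using in_FU[OF fF] by blast
    then show ?thesis using gy by blast
  qed
  define D where "D c = \<theta> (g c) / th ?b s (g c)" for c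
  have Dnz: "D c \<noteq> 0" for c using th_nz[OF gFU] ts_nz[OF gFU] by (simp add: D_def)
  have Dadd: "D (c1 + c2) = D c1 * D c2" for c1 c2
  proof -
    obtain y where y: "y \<in> FU K'" "g c1 * g c2 = g (c1 + c2) * y" using GG by blast
    have yb: "y \<in> FU ?b" using KFU[OF y(1)] .
    have e1: "\<theta> (g c1) * \<theta> (g c2) = \<theta> (g (c1 + c2)) * \<theta> y"
      using th_m[OF gFU gFU] th_m[OF gFU yb] y(2) by metis
    have e2: "th ?b s (g c1) * th ?b s (g c2) = th ?b s (g (c1 + c2)) * th ?b s y"
      using ts_m[OF gFU gFU] ts_m[OF gFU yb] y(2) by metis
    have e3: "\<theta> y = th ?b s y" using IH y(1) unfolding K'_def by blast
    have "D c1 * D c2 = (\<theta> (g c1) * \<theta> (g c2)) / (th ?b s (g c1) * th ?b s (g c2))"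
      by (simp add: D_def)
    also have "\<dots> = (\<theta> (g (c1 + c2)) * \<theta> y) / (th ?b s (g (c1 + c2)) * th ?b s y)" using e1 e2 by simp
    also have "\<dots> = D (c1 + c2)" using e3 ts_nz[OF yb] by (simp add: D_def)
    finally show ?thesis by simp
  qed
  obtain bb where bb: "\<forall>c. D c = lam (bb * c)" using duality[of D] Dadd Dnz by blast
  define s' where "s' = s + fls_const bb * u_E ^ p"
  have BM: "fls_const bb * u_E ^ p \<in> Mid (int p)" by (rule Mid_mult_const[OF Mid_uE])
  have s'M: "s' \<in> Mid 0" using Mid_add[OF sM Mid_mono[OF _ BM]] by (simp add: s'_def)
  have s'I: "inv \<alpha> i s'"
  proof -
    have sRa: "s \<in> R_alpha (2 * n - 1) \<alpha>" "tau s = s" using sI by (auto simp: inv_def)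
    have pb: "int p < int (2 * n - 1) - 2 * int \<alpha>" using JN al unfolding p_def by simp
    have "s' \<in> R_alpha (2 * n - 1) \<alpha>"
      unfolding R_alpha_def
    proof (intro CollectI allI impI)
      fix k assume "s' $$ k \<noteq> 0"
      then have "s $$ k \<noteq> 0 \<or> k = int p" by (auto simp: s'_def u_E_def split: if_splits)
      then show "0 \<le> k \<and> k < int (2 * n - 1) - 2 * int \<alpha>"
        using sRa(1) pb unfolding R_alpha_def by auto
    qed
    moreover have "tau s' = s'" using sRa(2) by (simp add: s'_def tau_add tau_mult p_def tau_uE_even)
    moreover have "s' - fls_const ((-1) ^ i) \<in> Mid (int (2 * n) - 2 * int (2 * \<alpha> + 1))"
      if a: "\<alpha> < n div 2"
    proof -
      have "s - fls_const ((-1) ^ i) \<in> Mid (int (2 * n) - 2 * int (2 * \<alpha> + 1))"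
        using sI a by (simp add: inv_def)
      moreover have "fls_const bb * u_E ^ p \<in> Mid (int (2 * n) - 2 * int (2 * \<alpha> + 1))"
        using Mid_mono[OF _ BM] Ja[OF a] JN unfolding p_def by simp
      ultimately show ?thesis using Mid_add by (fastforce simp: s'_def algebra_simps)
    qed
    ultimately show ?thesis by (simp add: inv_def)
  qed
  have s'R: "s' \<in> R_alpha_tau' (2 * n - 1) \<alpha>" using inv_R'[OF s'I i] .
  have tc': "is_character_on (FU ?b) (th ?b s')"
    by (rule th_char[OF _ s'M Rp_props(4)[OF al s'R]]) simp
  have CA: "th ?b s x = th ?b s' x" if x: "x \<in> FU K'" for x
  proof -
    obtain a z where az: "a \<in> F_units" "tau z = - z" "z \<in> Mid (int K')" "x = a * (1 + z)"
      using DEC[OF _ x] by (auto simp: K'_def)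
    have zb: "z \<in> Mid (int ?b)" using Mid_mono[OF _ az(3), of "int ?b"] by (simp add: K'_def)
    have "chi (1 + z * s) = chi (1 + z * s')"
    proof (rule CONG)
      show "1 + z * s - 1 \<in> Mid 1" using U1_of[OF zb _ sM] by simp
      show "1 + z * s' - 1 \<in> Mid 1" using U1_of[OF zb _ s'M] by simp
      have "z * (fls_const bb * u_E ^ p) \<in> Mid (int K' + int p)" by (rule Mid_mult[OF az(3) BM])
      then have "z * (fls_const bb * u_E ^ p) \<in> Mid (int (2 * n))"
        by (rule Mid_mono[rotated]) (use Kp in simp)
      moreover have "1 + z * s - (1 + z * s') = - (z * (fls_const bb * u_E ^ p))"
        by (simp add: s'_def algebra_simps)
      ultimately show "1 + z * s - (1 + z * s') \<in> Mid (int (2 * n))" by simp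
    qed
    then show ?thesis using th_eq[OF az(1,2) zb az(4)] by simp
  qed
  have CB: "\<theta> (g c) = th ?b s' (g c)" for c
  proof -
    let ?h = "fls_const c * u_E ^ (2 * J)"
    have t1: "th ?b s' (g c) = chi (1 + u_E ^ ?b * ?h * s')" unfolding gh by (rule th_h[OF _ hO]) simp
    have t2: "th ?b s (g c) = chi (1 + u_E ^ ?b * ?h * s)" unfolding gh by (rule th_h[OF _ hO]) simp
    define A where "A = u_E ^ ?b * ?h * s"
    define W where "W = fls_const (c * bb) * u_E ^ ?m"
    have uh: "u_E ^ ?b * ?h \<in> Mid (int ?b)"
      using Mid_mult[OF Mid_uE[of ?b] Mid_mono[OF _ Mid_mult_const[OF Mid_uE[of "2 * J"]], of 0]]
      by simp
    have AM: "A \<in> Mid 1" using U1_of[OF uh _ sM] by (simp add: A_def)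
    have WM: "W \<in> Mid (int ?m)" unfolding W_def by (rule Mid_m)
    have e: "u_E ^ ?b * ?h * s' = A + W"
    proof -
      have "u_E ^ ?b * ?h * s' = A + fls_const c * fls_const bb * u_E ^ (?b + 2 * J + p)"
        by (simp add: A_def s'_def algebra_simps power_add)
      also have "?b + 2 * J + p = ?m" using Lp by (simp add: L_def)
      finally show ?thesis by (simp add: W_def)
    qed
    have "chi (1 + (A + W)) = chi ((1 + A) * (1 + W))"
    proof (rule CONG)
      show "1 + (A + W) - 1 \<in> Mid 1" using Mid_add[OF AM Mid_mono[OF m_ge1 WM]] by simp
      show "(1 + A) * (1 + W) - 1 \<in> Mid 1" using Mid1_mult[of "1 + A" "1 + W"] AM U1_m[of "c * bb"]
        by (simp add: W_def)
      have "1 + (A + W) - (1 + A) * (1 + W) = - (A * W)" by (simp add: algebra_simps)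
      moreover have "A * W \<in> Mid (int (2 * n))" using Mid_mult[OF AM WM] npos by simp
      ultimately show "1 + (A + W) - (1 + A) * (1 + W) \<in> Mid (int (2 * n))" by simp
    qed
    also have "\<dots> = chi (1 + A) * lam (c * bb)"
      using chi_mult[OF Mid1_nz[of "1 + A"] Mid1_nz[OF U1_m[of "c * bb"]]] AM by (simp add: lam_def W_def)
    finally have "th ?b s' (g c) = th ?b s (g c) * D c" using t1 t2 e bb by (simp add: A_def mult.commute)
    then show ?thesis using ts_nz[OF gFU] by (simp add: D_def)
  qed
  have CC: "\<theta> x = th ?b s' x" if x: "x \<in> FU L" for x
  proof -
    obtain a z where az: "a \<in> F_units" "tau z = - z" "z \<in> Mid (int L)" "x = a * (1 + z)"
      using DEC[OF L1 x] by blast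
    have zb: "z \<in> Mid (int ?b)" using Mid_mono[OF _ az(3), of "int ?b"] by (simp add: L_def)
    define hz where "hz = fls_shift (int ?b) z"
    have hz: "hz \<in> O_F" "z = u_E ^ ?b * hz" using shift_odd[OF az(2) zb] by (simp_all add: hz_def)
    have thz: "tau hz = hz" using hz(1) O_F_iff' by blast
    have hzM: "hz \<in> Mid (int (2 * J))" using az(3) by (auto simp: Mid_def hz_def L_def)
    define c where "c = hz $$ int (2 * J)"
    define h2 where "h2 = hz - fls_const c * u_E ^ (2 * J)"
    have h2a: "h2 \<in> Mid (2 * int J + 1)"
      unfolding Mid_def
    proof (intro CollectI allI impI)
      fix k assume "k < 2 * int J + 1"
      then consider "k < int (2 * J)" | "k = int (2 * J)" by linarith
      then show "h2 $$ k = 0"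
      proof cases
        case 1 then show ?thesis using hzM by (simp add: h2_def Mid_def u_E_def)
      next
        case 2 then show ?thesis by (simp add: h2_def c_def u_E_def)
      qed
    qed
    have th2: "tau h2 = h2" using thz by (simp add: h2_def tau_diff tau_mult tau_uE_even)
    have h2M: "h2 \<in> Mid (2 * int J + 2)" by (rule even_Mid_up[OF th2 h2a])
    define y where "y = (1 + z) * inverse (g c)"
    have gy: "1 + z = g c * y" using gnz[of c] by (simp add: y_def)
    have "y - 1 = (z - fls_const c * X) * inverse (g c)"
      using gnz[of c] by (simp add: y_def g_def field_simps)
    also have "z - fls_const c * X = u_E ^ ?b * h2"
      by (simp add: hz(2) h2_def X_def L_def algebra_simps power_add)
    finally have "y - 1 \<in> Mid (int ?b + (2 * int J + 2) + 0)"
      by (simp only:) (intro Mid_mult Mid_uE h2M Mid1_inverse(1)[OF g1])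
    then have "y - 1 \<in> Mid (int K')" by (simp add: K'_def)
    then have yK: "y \<in> FU K'" using U_in_FU[of "y - 1" K'] by simp
    have yb: "y \<in> FU ?b" using KFU[OF yK] .
    have ab: "a \<in> FU ?b" "a \<in> FU K'" using az(1) F_in_FU by auto
    have gyb: "g c * y \<in> FU ?b" using FU_mult[OF gFU yb] .
    have xe: "x = a * (g c * y)" using az(4) gy by simp
    have "\<theta> x = \<theta> a * (\<theta> (g c) * \<theta> y)" using xe th_m[OF ab(1) gyb] th_m[OF gFU yb] by simp
    also have "\<theta> a = th ?b s' a" using IH ab(2) CA[OF ab(2)] unfolding K'_def by auto
    also have "\<theta> y = th ?b s' y" using IH yK CA[OF yK] unfolding K'_def by auto
    also have "\<theta> (g c) = th ?b s' (g c)" by (rule CB)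
    also have "th ?b s' a * (th ?b s' (g c) * th ?b s' y) = th ?b s' x"
      using xe tc' ab(1) gyb gFU yb by (simp add: is_character_on_def)
    finally show ?thesis .
  qed
  show ?thesis using s'I CC unfolding L_def by blast
qed

end

context Lchi begin

lemma EXIST:
  assumes al: "\<alpha> < n" and th_c: "is_character_on (FU (2 * \<alpha> + 1)) (\<theta> :: 'k fls \<Rightarrow> complex)"
    and i: "i \<in> {0, 1::nat}"
    and hyp: "\<forall>x\<in>FU (min (2 * n) (2 * (2 * \<alpha> + 1))). \<theta> x = chi ((tau ^^ i) x)"
  shows "\<exists>s. s \<in> R_alpha_tau' (2 * n - 1) \<alpha> \<and> (\<forall>x\<in>FU (2 * \<alpha> + 1). \<theta> x = th (2 * \<alpha> + 1) s x)"
proof -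
  let ?b = "2 * \<alpha> + 1"
  define J0 where "J0 = (if \<alpha> < n div 2 then \<alpha> + 1 else n - \<alpha>)"
  have J0N: "J0 \<le> n - \<alpha>" unfolding J0_def by presburger
  define s0 where "s0 = fls_const ((-1::'k) ^ i)"
  have s0I: "inv \<alpha> i s0"
    unfolding inv_def
  proof (intro conjI impI)
    show "s0 \<in> R_alpha (2 * n - 1) \<alpha>" using al by (auto simp: R_alpha_def s0_def split: if_splits)
    show "tau s0 = s0" by (simp add: s0_def)
  qed (simp add: s0_def)
  have s0R: "s0 \<in> R_alpha_tau' (2 * n - 1) \<alpha>" using inv_R'[OF s0I i] .
  have s0M: "s0 \<in> Mid 0" by (simp add: s0_def)
  have base: "\<forall>x\<in>FU (?b + 2 * J0). \<theta> x = th ?b s0 x"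
  proof (cases "\<alpha> < n div 2")
    case True
    have mn: "min (2 * n) (2 * ?b) = 2 * ?b" using True by presburger
    show ?thesis
    proof
      fix x :: "'k fls" assume "x \<in> FU (?b + 2 * J0)"
      then have x: "x \<in> FU (2 * ?b)" using FU_mono[of "2 * ?b" "?b + 2 * J0" x] True
        by (simp add: J0_def)
      have "\<theta> x = chi ((tau ^^ i) x)" using hyp x mn by simp
      also have "\<dots> = th ?b s0 x" using th_tau_part[OF True s0R i _ x] by (simp add: s0_def)
      finally show "\<theta> x = th ?b s0 x" .
    qed
  next
    case False
    show ?thesis
    proof
      fix x :: "'k fls" assume "x \<in> FU (?b + 2 * J0)"
      then have x: "x \<in> FU (2 * n)" using FU_mono[of "2 * n" "?b + 2 * J0" x] False al
        by (simp add: J0_def)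
      then have x': "x \<in> FU (min (2 * n) (2 * ?b))" using FU_mono[of _ "2 * n" x] by simp
      have "\<theta> x = chi ((tau ^^ i) x)" using hyp x' by simp
      also have "\<dots> = chi x" using i chi_tau_2n[OF x] by auto
      also have "\<dots> = th ?b s0 x" using th_2n[OF _ _ s0M x] al by simp
      finally show "\<theta> x = th ?b s0 x" .
    qed
  qed
  have ind: "k \<le> J0 \<Longrightarrow> \<exists>s. inv \<alpha> i s \<and> (\<forall>x\<in>FU (?b + 2 * (J0 - k)). \<theta> x = th ?b s x)" for k
  proof (induction k)
    case 0 then show ?case using s0I base by auto
  next
    case (Suc k)
    then obtain s where s: "inv \<alpha> i s" "\<forall>x\<in>FU (?b + 2 * (J0 - k)). \<theta> x = th ?b s x" by auto
    define J where "J = J0 - Suc k"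
    have JJ: "J0 - k = J + 1" using Suc.prems by (simp add: J_def)
    have JN: "J + 1 \<le> n - \<alpha>" using J0N JJ by simp
    have Ja: "\<alpha> < n div 2 \<Longrightarrow> J \<le> \<alpha>" using Suc.prems by (simp add: J_def J0_def)
    have "\<exists>s'. inv \<alpha> i s' \<and> (\<forall>x\<in>FU (?b + 2 * J). \<theta> x = th ?b s' x)"
    proof (rule STEP[OF al th_c i JN Ja s(1)])
      show "\<forall>x\<in>FU (?b + 2 * (J + 1)). \<theta> x = th ?b s x" using s(2) by (simp only: JJ)
    qed
    then show ?case by (simp add: J_def)
  qed
  obtain s where s: "inv \<alpha> i s" "\<forall>x\<in>FU ?b. \<theta> x = th ?b s x" using ind[of J0] by auto
  then show ?thesis using inv_R'[OF s(1) i] by blast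
qed

lemma chi_s_cong:
  assumes al: "\<alpha> < n" and c1: "is_chi_s chi n \<alpha> s \<theta>1"
    and c2: "is_character_on (FU (2 * \<alpha> + 1)) \<theta>2"
    and eq: "\<forall>x\<in>FU (2 * \<alpha> + 1). \<theta>2 x = \<theta>1 x"
  shows "is_chi_s chi n \<alpha> (s::'k fls) \<theta>2"
proof -
  let ?b = "2 * \<alpha> + 1"
  have m1: "2 * n - 1 + 1 = 2 * n" using npos by simp
  have sub1: "x \<in> FU (2 * n) \<Longrightarrow> x \<in> FU ?b" for x :: "'k fls" using FU_mono[of ?b "2 * n" x] al by simp
  have sub2: "x \<in> FU (2 * ?b) \<Longrightarrow> x \<in> FU ?b" for x :: "'k fls" using FU_mono[of ?b "2 * ?b" x] by simp
  have sub3: "h \<in> O_F \<Longrightarrow> 1 + u_E ^ ?b * h \<in> FU ?b" for h :: "'k fls"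
    using U_in_FU[of "u_E ^ ?b * h" ?b] Mid_mult[OF Mid_uE[of ?b], of h 0] O_F_iff' by simp
  show ?thesis using c1 c2 eq sub1 sub2 sub3 unfolding is_chi_s_def Let_def m1 by auto
qed

end

theorem proposition4p11:
  fixes \<chi> :: "'k::{field,finite} fls \<Rightarrow> complex" and n \<alpha> :: nat
  assumes q_odd: "odd (card (UNIV :: 'k set))"
    and chi_char: "is_character_on E_units \<chi>"
    and n_pos: "n \<ge> 1"
    and level: "has_level \<chi> (2 * n - 1)"
    and alpha: "\<alpha> < n"
  shows "(\<forall>s\<in>R_alpha_tau' (2 * n - 1) \<alpha>.
            \<exists>\<theta>. is_chi_s \<chi> n \<alpha> s \<theta> \<and>
              (\<forall>\<theta>'. is_chi_s \<chi> n \<alpha> s \<theta>' \<longrightarrow> (\<forall>x\<in>FU (2 * \<alpha> + 1). \<theta>' x = \<theta> x)))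
       \<and> (\<forall>\<theta>. is_character_on (FU (2 * \<alpha> + 1)) \<theta> \<longrightarrow>
            ((\<forall>x\<in>FU (min (2 * n) (2 * (2 * \<alpha> + 1))). \<theta> x = \<chi> x) \<or>
             (\<forall>x\<in>FU (min (2 * n) (2 * (2 * \<alpha> + 1))). \<theta> x = \<chi> (tau x))) \<longrightarrow>
            (\<exists>!s. s \<in> R_alpha_tau' (2 * n - 1) \<alpha> \<and> is_chi_s \<chi> n \<alpha> s \<theta>))"
proof -
  interpret L: Lchi \<chi> n
    using two_nz[OF q_odd] chi_char n_pos level by unfold_locales
  let ?b = "2 * \<alpha> + 1"
  have P1: "\<exists>\<theta>. is_chi_s \<chi> n \<alpha> s \<theta> \<and>
              (\<forall>\<theta>'. is_chi_s \<chi> n \<alpha> s \<theta>' \<longrightarrow> (\<forall>x\<in>FU ?b. \<theta>' x = \<theta> x))"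
    if s: "s \<in> R_alpha_tau' (2 * n - 1) \<alpha>" for s
  proof (intro exI conjI allI impI)
    show "is_chi_s \<chi> n \<alpha> s (L.th ?b s)" by (rule L.part1_chi_s[OF alpha s])
    fix \<theta>' assume c: "is_chi_s \<chi> n \<alpha> s \<theta>'"
    have sO: "s \<in> O_F" using L.Rp_props(3)[OF alpha s] .
    show "\<forall>x\<in>FU ?b. \<theta>' x = L.th ?b s x"
      by (rule L.UNIQ[OF _ L.chi_s_D(1)[OF c sO] L.chi_s_D(2)[OF c sO] _ L.chi_s_D(3)[OF c sO]])
        (use alpha in simp_all)
  qed
  have P2: "\<exists>!s. s \<in> R_alpha_tau' (2 * n - 1) \<alpha> \<and> is_chi_s \<chi> n \<alpha> s \<theta>"
    if c: "is_character_on (FU ?b) \<theta>"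
      and h: "(\<forall>x\<in>FU (min (2 * n) (2 * ?b)). \<theta> x = \<chi> x) \<or>
             (\<forall>x\<in>FU (min (2 * n) (2 * ?b)). \<theta> x = \<chi> (tau x))" for \<theta>
  proof -
    obtain i :: nat where i: "i \<in> {0, 1}" "\<forall>x\<in>FU (min (2 * n) (2 * ?b)). \<theta> x = \<chi> ((tau ^^ i) x)"
    proof -
      from h show ?thesis
      proof
        assume "\<forall>x\<in>FU (min (2 * n) (2 * ?b)). \<theta> x = \<chi> x"
        then show ?thesis using that[of 0] by simp
      next
        assume "\<forall>x\<in>FU (min (2 * n) (2 * ?b)). \<theta> x = \<chi> (tau x)"
        then show ?thesis using that[of 1] by simp
      qed
    qed
    obtain s where s: "s \<in> R_alpha_tau' (2 * n - 1) \<alpha>" "\<forall>x\<in>FU ?b. \<theta> x = L.th ?b s x"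
      using L.EXIST[OF alpha c i(1) i(2)] by blast
    have cs: "is_chi_s \<chi> n \<alpha> s \<theta>"
      by (rule L.chi_s_cong[OF alpha L.part1_chi_s[OF alpha s(1)] c s(2)])
    show ?thesis
    proof (rule ex1I[of _ s])
      show "s \<in> R_alpha_tau' (2 * n - 1) \<alpha> \<and> is_chi_s \<chi> n \<alpha> s \<theta>" using s(1) cs by blast
      fix s2 assume s2: "s2 \<in> R_alpha_tau' (2 * n - 1) \<alpha> \<and> is_chi_s \<chi> n \<alpha> s2 \<theta>"
      have H1: "\<forall>h\<in>O_F. \<theta> (1 + u_E ^ ?b * h) = \<chi> (1 + u_E ^ ?b * h * s)"
        using L.chi_s_D(3)[OF cs L.Rp_props(3)[OF alpha s(1)]] .
      have H2: "\<forall>h\<in>O_F. \<theta> (1 + u_E ^ ?b * h) = \<chi> (1 + u_E ^ ?b * h * s2)"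
        using L.chi_s_D(3)[OF conjunct2[OF s2] L.Rp_props(3)[OF alpha conjunct1[OF s2]]] .
      show "s2 = s"
        by (rule L.SEP[OF alpha conjunct1[OF s2] s(1)]) (use H1 H2 in simp)
    qed
  qed
  show ?thesis using P1 P2 by blast
qed


end
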